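(* Assume (L1) holds. If $s(\mathscr L)$ is the principal eigenvalue of $\mathscr L$, then $s(\mathscr L)>\theta_M$.
   Context: $\Omega\subset\mathbb R^N$ bounded with smooth boundary, $T>0$, $m\ge1$, $Q_T=\bar\Omega\times(0,T]$. For each $i\in\{1,\dots,m\}$, $d_i>0$, $J_i:\mathbb R^{2N}\to[0,\infty)$ continuous with $J_i(x,x)>0$, $\int_{\mathbb R^N}J_i(x,y)dy=1$. $\ell_{ik}\in C(\bar Q_T)$ are $T$-periodic in $t$, $L=(\ell_{ik})$, $\mathscr L_i[\phi]=d_i\int_\Omega J_i(x,y)\phi_i(y,t)dy+\sum_k\ell_{ik}\phi_k-\partial_t\phi_i$ on $T$-periodic continuous functions, $C^1$ in $t$; $s(\mathscr L)$ is its spectral bound; it is the principal eigenvalue if it is an eigenvalue with an eigenfunction having all components strictly positive on $\bar\Omega\times\mathbb R$. (L1): $\ell_{ik}\ge0$ for $i\ne k$. $\theta(x)$ is the spectral bound of $[\mathscr P_x\phi](t)=-\phi'(t)+L(x,t)\phi(t)$ on $T$-periodic $C^1$ functions $\mathbb R\to\mathbb R^m$, and $\theta_M=\max_{\bar\Omega}\theta$. *)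

theory Defs
  imports "HOL-Analysis.Analysis"
begin

text \<open>Iterated partial derivatives of a real function on real^'n
  (the list is applied from the right: the head is the outermost derivative).\<close>
fun pderivs :: "'n::finite list \<Rightarrow> (real^'n \<Rightarrow> real) \<Rightarrow> real^'n \<Rightarrow> real" where
  "pderivs [] g = g"
| "pderivs (i # is) g = (\<lambda>x. deriv (\<lambda>h. pderivs is g (x + h *\<^sub>R axis i 1)) 0)"

definition smooth_on :: "(real^'n::finite) set \<Rightarrow> (real^'n \<Rightarrow> real) \<Rightarrow> bool" where
  "smooth_on U g \<longleftrightarrow>
     (\<forall>is. continuous_on U (pderivs is g) \<and>
       (\<forall>i. \<forall>x\<in>U. ((\<lambda>h. pderivs is g (x + h *\<^sub>R axis i 1)) has_real_derivative pderivs (i # is) g x) (at 0)))"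

definition smooth_boundary :: "(real^'n::finite) set \<Rightarrow> bool" where
  "smooth_boundary \<Omega> \<longleftrightarrow>
     (\<forall>z\<in>frontier \<Omega>. \<exists>U g. open U \<and> z \<in> U \<and> smooth_on U g \<and>
        (\<forall>x\<in>U. x \<in> \<Omega> \<longleftrightarrow> g x < 0) \<and> (\<exists>i. pderivs [i] g z \<noteq> 0))"

text \<open>Functions are compared / normed only on the set S. X is the (complexified) Banach
  space with the sup norm over S, D the domain, A the operator.\<close>

definition supn :: "'a set \<Rightarrow> ('a \<Rightarrow> complex^'m::finite) \<Rightarrow> real" where
  "supn S f = (SUP p\<in>S. norm (f p))"

definition cscale :: "complex \<Rightarrow> complex^'m::finite \<Rightarrow> complex^'m" where
  "cscale \<mu> v = (\<chi> i. \<mu> * v $ i)"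

definition in_resolvent ::
  "'a set \<Rightarrow> ('a \<Rightarrow> complex^'m::finite) set \<Rightarrow> ('a \<Rightarrow> complex^'m) set
    \<Rightarrow> (('a \<Rightarrow> complex^'m) \<Rightarrow> 'a \<Rightarrow> complex^'m) \<Rightarrow> complex \<Rightarrow> bool" where
  "in_resolvent S X D A \<mu> \<longleftrightarrow>
     (\<forall>\<psi>\<in>X. \<exists>\<phi>\<in>D. \<forall>p\<in>S. cscale \<mu> (\<phi> p) - A \<phi> p = \<psi> p) \<and>
     (\<exists>C. \<forall>\<phi>\<in>D. supn S \<phi> \<le> C * supn S (\<lambda>p. cscale \<mu> (\<phi> p) - A \<phi> p))"

definition spectrum_op ::
  "'a set \<Rightarrow> ('a \<Rightarrow> complex^'m::finite) set \<Rightarrow> ('a \<Rightarrow> complex^'m) set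
    \<Rightarrow> (('a \<Rightarrow> complex^'m) \<Rightarrow> 'a \<Rightarrow> complex^'m) \<Rightarrow> complex set" where
  "spectrum_op S X D A = {\<mu>. \<not> in_resolvent S X D A \<mu>}"

text \<open>Spectral bound, sup of real parts of the spectrum (-infinity if the spectrum is empty).\<close>
definition spectral_bound ::
  "'a set \<Rightarrow> ('a \<Rightarrow> complex^'m::finite) set \<Rightarrow> ('a \<Rightarrow> complex^'m) set
    \<Rightarrow> (('a \<Rightarrow> complex^'m) \<Rightarrow> 'a \<Rightarrow> complex^'m) \<Rightarrow> ereal" where
  "spectral_bound S X D A = (SUP \<mu>\<in>spectrum_op S X D A. ereal (Re \<mu>))"

definition is_principal_eigenvalue ::
  "'a set \<Rightarrow> ('a \<Rightarrow> complex^'m::finite) set \<Rightarrow> ('a \<Rightarrow> complex^'m) set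
    \<Rightarrow> (('a \<Rightarrow> complex^'m) \<Rightarrow> 'a \<Rightarrow> complex^'m) \<Rightarrow> bool" where
  "is_principal_eigenvalue S X D A \<longleftrightarrow>
     (\<exists>s::real. spectral_bound S X D A = ereal s \<and>
        (\<exists>\<phi>\<in>D. (\<forall>p\<in>S. \<forall>i. Im (\<phi> p $ i) = 0 \<and> Re (\<phi> p $ i) > 0) \<and>
                 (\<forall>p\<in>S. A \<phi> p = cscale (complex_of_real s) (\<phi> p))))"

definition QS :: "(real^'n::finite) set \<Rightarrow> ((real^'n) \<times> real) set" where
  "QS \<Omega> = closure \<Omega> \<times> UNIV"

definition Xper :: "(real^'n::finite) set \<Rightarrow> real \<Rightarrow> ((real^'n) \<times> real \<Rightarrow> complex^'m::finite) set" where
  "Xper \<Omega> T = {\<phi>. continuous_on (QS \<Omega>) \<phi> \<and> (\<forall>x\<in>closure \<Omega>. \<forall>t. \<phi> (x, t + T) = \<phi> (x, t))}"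

definition Dper :: "(real^'n::finite) set \<Rightarrow> real \<Rightarrow> ((real^'n) \<times> real \<Rightarrow> complex^'m::finite) set" where
  "Dper \<Omega> T = {\<phi> \<in> Xper \<Omega> T. \<exists>\<phi>'\<in>Xper \<Omega> T. \<forall>x\<in>closure \<Omega>. \<forall>t.
       ((\<lambda>s. \<phi> (x, s)) has_vector_derivative \<phi>' (x, t)) (at t)}"

definition Lop :: "(real^'n::finite) set \<Rightarrow> ('m::finite \<Rightarrow> real) \<Rightarrow> ('m \<Rightarrow> real^'n \<Rightarrow> real^'n \<Rightarrow> real)
     \<Rightarrow> ('m \<Rightarrow> 'm \<Rightarrow> real^'n \<Rightarrow> real \<Rightarrow> real)
     \<Rightarrow> ((real^'n) \<times> real \<Rightarrow> complex^'m) \<Rightarrow> (real^'n) \<times> real \<Rightarrow> complex^'m" where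
  "Lop \<Omega> d J l \<phi> = (\<lambda>(x, t). \<chi> i.
       complex_of_real (d i) * integral \<Omega> (\<lambda>y. complex_of_real (J i x y) * \<phi> (y, t) $ i)
     + (\<Sum>k\<in>UNIV. complex_of_real (l i k x t) * \<phi> (x, t) $ k)
     - vector_derivative (\<lambda>s. \<phi> (x, s)) (at t) $ i)"

definition Xode :: "real \<Rightarrow> (real \<Rightarrow> complex^'m::finite) set" where
  "Xode T = {\<phi>. continuous_on UNIV \<phi> \<and> (\<forall>t. \<phi> (t + T) = \<phi> t)}"

definition Dode :: "real \<Rightarrow> (real \<Rightarrow> complex^'m::finite) set" where
  "Dode T = {\<phi> \<in> Xode T. \<exists>\<phi>'\<in>Xode T. \<forall>t. (\<phi> has_vector_derivative \<phi>' t) (at t)}"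

definition Pop :: "('m::finite \<Rightarrow> 'm \<Rightarrow> real^'n::finite \<Rightarrow> real \<Rightarrow> real) \<Rightarrow> real^'n
     \<Rightarrow> (real \<Rightarrow> complex^'m) \<Rightarrow> real \<Rightarrow> complex^'m" where
  "Pop l x \<phi> = (\<lambda>t. \<chi> i. - (vector_derivative \<phi> (at t) $ i)
       + (\<Sum>k\<in>UNIV. complex_of_real (l i k x t) * \<phi> t $ k))"

definition theta :: "real \<Rightarrow> ('m::finite \<Rightarrow> 'm \<Rightarrow> real^'n::finite \<Rightarrow> real \<Rightarrow> real) \<Rightarrow> real^'n \<Rightarrow> ereal" where
  "theta T l x = spectral_bound (UNIV::real set) (Xode T :: (real \<Rightarrow> complex^'m) set) (Dode T) (Pop l x)"

definition theta_M :: "(real^'n::finite) set \<Rightarrow> real \<Rightarrow> ('m::finite \<Rightarrow> 'm \<Rightarrow> real^'n \<Rightarrow> real \<Rightarrow> real) \<Rightarrow> ereal" where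
  "theta_M \<Omega> T l = (SUP x\<in>closure \<Omega>. theta T l x)"

end

theory Submission
  imports Defs
begin

definition Rg :: "real \<Rightarrow> 'a::{real_normed_field,banach} \<Rightarrow> (real \<Rightarrow> 'a) \<Rightarrow> real \<Rightarrow> 'a" where
  "Rg T \<nu> h t = (1 / (1 - exp (- (T *\<^sub>R \<nu>)))) *
      (exp (- (t *\<^sub>R \<nu>)) * integral {t-T..t} (\<lambda>\<tau>. exp (\<tau> *\<^sub>R \<nu>) * h \<tau>))"

lemma Rg_unique:
  fixes w w' f :: "real \<Rightarrow> 'a::{real_normed_field,banach}"
  assumes T: "T > 0"
    and wd: "\<And>t. (w has_vector_derivative w' t) (at t)"
    and wp: "\<And>t. w (t + T) = w t"
    and eq: "\<And>t. w' t + \<nu> * w t = f t"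
    and ne: "exp (- (T *\<^sub>R \<nu>)) \<noteq> 1"
  shows "w t = Rg T \<nu> f t"
proof -
  let ?E = "\<lambda>\<tau>. exp (\<tau> *\<^sub>R \<nu>) * w \<tau>"
  have d: "(?E has_vector_derivative exp (\<tau> *\<^sub>R \<nu>) * f \<tau>) (at \<tau> within S)" for \<tau> S
  proof -
    have "(?E has_vector_derivative exp (\<tau> *\<^sub>R \<nu>) * w' \<tau> + exp (\<tau> *\<^sub>R \<nu>) * \<nu> * w \<tau>) (at \<tau> within S)"
      by (intro has_vector_derivative_mult exp_scaleR_has_vector_derivative_right
            has_vector_derivative_at_within[OF wd])
    moreover have "exp (\<tau> *\<^sub>R \<nu>) * w' \<tau> + exp (\<tau> *\<^sub>R \<nu>) * \<nu> * w \<tau> = exp (\<tau> *\<^sub>R \<nu>) * f \<tau>"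
      using eq[of \<tau>] by (simp add: algebra_simps flip: eq)
    ultimately show ?thesis by simp
  qed
  have "((\<lambda>\<tau>. exp (\<tau> *\<^sub>R \<nu>) * f \<tau>) has_integral ?E t - ?E (t - T)) {t-T..t}"
    using T by (intro fundamental_theorem_of_calculus) (auto intro: d)
  then have I: "integral {t-T..t} (\<lambda>\<tau>. exp (\<tau> *\<^sub>R \<nu>) * f \<tau>) = ?E t - ?E (t - T)"
    by (rule integral_unique)
  have wT: "w (t - T) = w t" using wp[of "t - T"] by simp
  have e1: "exp ((t - T) *\<^sub>R \<nu>) = exp (t *\<^sub>R \<nu>) * exp (- (T *\<^sub>R \<nu>))"
    by (simp add: scaleR_diff_left exp_add[symmetric])
  have e2: "exp (- (t *\<^sub>R \<nu>)) * exp (t *\<^sub>R \<nu>) = 1"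
    by (simp add: exp_add[symmetric])
  have "Rg T \<nu> f t = (1 / (1 - exp (- (T *\<^sub>R \<nu>)))) * (exp (- (t *\<^sub>R \<nu>)) * exp (t *\<^sub>R \<nu>)) * (1 - exp (- (T *\<^sub>R \<nu>))) * w t"
  proof -
    have "exp (- (t *\<^sub>R \<nu>)) * (exp (t *\<^sub>R \<nu>) * w t - exp (t *\<^sub>R \<nu>) * exp (- (T *\<^sub>R \<nu>)) * w t)
       = (exp (- (t *\<^sub>R \<nu>)) * exp (t *\<^sub>R \<nu>)) * (1 - exp (- (T *\<^sub>R \<nu>))) * w t"
      by (simp add: algebra_simps)
    then show ?thesis unfolding Rg_def I wT e1 by (simp add: mult.assoc)
  qed
  also have "\<dots> = w t" using ne unfolding e2 by (simp add: field_simps)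
  finally show ?thesis by simp
qed

lemma int_from_deriv:
  fixes H :: "real \<Rightarrow> 'a::banach"
  assumes H: "continuous_on UNIV H" and cv: "c < v"
  shows "((\<lambda>u. integral {c..u} H) has_vector_derivative H v) (at v)"
proof -
  have "((\<lambda>u. integral {c..u} H) has_vector_derivative H v) (at v within {c..v+1})"
    using cv by (intro integral_has_vector_derivative continuous_on_subset[OF H]) (simp_all)
  then have "((\<lambda>u. integral {c..u} H) has_vector_derivative H v) (at v within {c<..<v+1})"
    by (rule has_vector_derivative_within_subset) (simp add: subset_iff)
  moreover have "at v within {c<..<v+1} = at v"
    by (rule at_within_open) (use cv in simp_all)
  ultimately show ?thesis by simp
qed

lemma window_deriv:
  fixes H :: "real \<Rightarrow> 'a::banach"
  assumes H: "continuous_on UNIV H" and T: "T > 0"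
  shows "((\<lambda>t. integral {t-T..t} H) has_vector_derivative (H t0 - H (t0 - T))) (at t0)"
proof -
  define c where "c = t0 - T - 1"
  let ?G = "\<lambda>u. integral {c..u} H"
  have g1: "(?G has_vector_derivative H t0) (at t0)"
    using T by (intro int_from_deriv H) (auto simp: c_def)
  have "((?G \<circ> (\<lambda>t. t - T)) has_vector_derivative (1 *\<^sub>R H (t0 - T))) (at t0)"
  proof (rule vector_diff_chain_at)
    have "((\<lambda>t. t - T) has_vector_derivative 1 - 0) (at t0)"
      by (intro has_vector_derivative_diff has_vector_derivative_id has_vector_derivative_const)
    then show "((\<lambda>t. t - T) has_vector_derivative 1) (at t0)" by simp
    show "(?G has_vector_derivative H (t0 - T)) (at (t0 - T))"
      by (rule int_from_deriv[OF H]) (simp add: c_def)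
  qed
  then have g2: "((\<lambda>t. ?G (t - T)) has_vector_derivative H (t0 - T)) (at t0)"
    by (simp add: o_def)
  have "((\<lambda>t. ?G t - ?G (t - T)) has_vector_derivative (H t0 - H (t0 - T))) (at t0)"
    by (intro has_vector_derivative_diff g1 g2)
  then show ?thesis
  proof (rule has_vector_derivative_transform_within_open[where S="{c+T<..}"])
    fix y assume y: "y \<in> {c+T<..}"
    have "H integrable_on {c..y}"
      by (intro integrable_continuous_real continuous_on_subset[OF H]) auto
    then have "integral {c..y - T} H + integral {y - T..y} H = integral {c..y} H"
      using y T by (intro Henstock_Kurzweil_Integration.integral_combine) (simp_all add: c_def)
    then show "?G y - ?G (y - T) = integral {y-T..y} H" by (simp add: algebra_simps)
  qed (simp_all add: c_def)
qed

lemma Rg_deriv: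
  fixes h :: "real \<Rightarrow> 'a::{real_normed_field,banach}"
  assumes h: "continuous_on UNIV h" and hp: "\<And>t. h (t + T) = h t" and T: "T > 0"
    and ne: "exp (- (T *\<^sub>R \<nu>)) \<noteq> 1"
  shows "(Rg T \<nu> h has_vector_derivative (h t - \<nu> * Rg T \<nu> h t)) (at t)"
proof -
  let ?e = "exp (- (T *\<^sub>R \<nu>))"
  let ?H = "\<lambda>\<tau>. exp (\<tau> *\<^sub>R \<nu>) * h \<tau>"
  let ?F = "\<lambda>t. integral {t-T..t} ?H"
  have Hc: "continuous_on UNIV ?H"
    by (intro continuous_intros h continuous_on_exp) 
  have dF: "(?F has_vector_derivative (?H t - ?H (t - T))) (at t)"
    by (rule window_deriv[OF Hc T])
  have dE: "((\<lambda>t. exp (t *\<^sub>R (- \<nu>))) has_vector_derivative exp (t *\<^sub>R (- \<nu>)) * (- \<nu>)) (at t)"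
    by (rule exp_scaleR_has_vector_derivative_right)
  have "((\<lambda>t. (1 / (1 - ?e)) * (exp (t *\<^sub>R (- \<nu>)) * ?F t)) has_vector_derivative
      (1 / (1 - ?e)) * (exp (t *\<^sub>R (- \<nu>)) * (?H t - ?H (t - T)) + exp (t *\<^sub>R (- \<nu>)) * (- \<nu>) * ?F t)) (at t)"
    by (intro has_vector_derivative_mult_right has_vector_derivative_mult dE dF)
  moreover have "(\<lambda>t. (1 / (1 - ?e)) * (exp (t *\<^sub>R (- \<nu>)) * ?F t)) = Rg T \<nu> h"
    by (rule ext) (simp add: Rg_def)
  moreover have "exp (t *\<^sub>R (- \<nu>)) * (?H t - ?H (t - T)) = (1 - ?e) * h t"
  proof -
    have hT: "h (t - T) = h t" using hp[of "t - T"] by simp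
    have "exp (t *\<^sub>R (- \<nu>)) * (?H t - ?H (t - T)) =
       (exp (- (t *\<^sub>R \<nu>)) * exp (t *\<^sub>R \<nu>)) * h t - (exp (- (t *\<^sub>R \<nu>)) * exp (t *\<^sub>R \<nu>)) * ?e * h t"
      by (simp add: hT scaleR_diff_left exp_add[symmetric] algebra_simps)
    also have "\<dots> = (1 - ?e) * h t" by (simp add: exp_add[symmetric] algebra_simps)
    finally show ?thesis .
  qed
  ultimately have "(Rg T \<nu> h has_vector_derivative
      (1 / (1 - ?e)) * ((1 - ?e) * h t + exp (t *\<^sub>R (- \<nu>)) * (- \<nu>) * ?F t)) (at t)"
    by simp
  moreover have "(1 / (1 - ?e)) * ((1 - ?e) * h t + exp (t *\<^sub>R (- \<nu>)) * (- \<nu>) * ?F t)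
      = h t - \<nu> * Rg T \<nu> h t"
    using ne by (simp add: Rg_def field_simps)
  ultimately show ?thesis by simp
qed

lemma Rg_periodic:
  fixes h :: "real \<Rightarrow> 'a::{real_normed_field,banach}"
  assumes hp: "\<And>t. h (t + T) = h t"
  shows "Rg T \<nu> h (t + T) = Rg T \<nu> h t"
proof -
  let ?H = "\<lambda>\<tau>. exp (\<tau> *\<^sub>R \<nu>) * h \<tau>"
  have "integral {t + T - T..t + T} ?H = integral {t-T..t} (\<lambda>x. ?H (x + T))"
    using integral_shift_real_ivl[where f="?H" and a=t and c=T and b="t+T"] by simp
  also have "\<dots> = integral {t-T..t} (\<lambda>x. exp (T *\<^sub>R \<nu>) * ?H x)"
    by (simp add: hp scaleR_add_left exp_add algebra_simps)
  also have "\<dots> = exp (T *\<^sub>R \<nu>) * integral {t-T..t} ?H"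
    by simp
  finally have I: "integral {t + T - T..t + T} ?H = exp (T *\<^sub>R \<nu>) * integral {t-T..t} ?H" .
  have "exp (- ((t + T) *\<^sub>R \<nu>)) * exp (T *\<^sub>R \<nu>) = exp (- (t *\<^sub>R \<nu>))"
    by (simp add: scaleR_add_left exp_add[symmetric])
  then show ?thesis unfolding Rg_def I by (simp add: mult.assoc[symmetric])
qed

lemma Rg_cont:
  fixes h :: "real \<Rightarrow> 'a::{real_normed_field,banach}"
  assumes h: "continuous_on UNIV h" and hp: "\<And>t. h (t + T) = h t" and T: "T > 0"
    and ne: "exp (- (T *\<^sub>R \<nu>)) \<noteq> 1"
  shows "continuous_on UNIV (Rg T \<nu> h)"
  by (rule continuous_on_vector_derivative) (use Rg_deriv[OF h hp T ne] in auto)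

lemma integrable_exp_mult:
  fixes h :: "real \<Rightarrow> 'a::{real_normed_field,banach}"
  assumes h: "continuous_on UNIV h"
  shows "(\<lambda>\<tau>. exp (\<tau> *\<^sub>R \<nu>) * h \<tau>) integrable_on {a..b}"
proof -
  have "continuous_on UNIV (\<lambda>\<tau>. exp (\<tau> *\<^sub>R \<nu>) * h \<tau>)"
    by (intro continuous_intros h continuous_on_exp)
  then show ?thesis
    by (rule integrable_continuous_real[OF continuous_on_subset[OF _ subset_UNIV]])
qed

lemma Rg_sum:
  fixes f :: "'b \<Rightarrow> real \<Rightarrow> 'a::{real_normed_field,banach}"
  assumes A: "finite A" and f: "\<And>a. a \<in> A \<Longrightarrow> continuous_on UNIV (f a)"
  shows "Rg T \<nu> (\<lambda>\<tau>. \<Sum>a\<in>A. f a \<tau>) t = (\<Sum>a\<in>A. Rg T \<nu> (f a) t)"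
proof -
  have "integral {t-T..t} (\<lambda>\<tau>. exp (\<tau> *\<^sub>R \<nu>) * (\<Sum>a\<in>A. f a \<tau>)) =
        integral {t-T..t} (\<lambda>\<tau>. \<Sum>a\<in>A. exp (\<tau> *\<^sub>R \<nu>) * f a \<tau>)"
    by (simp add: sum_distrib_left)
  also have "\<dots> = (\<Sum>a\<in>A. integral {t-T..t} (\<lambda>\<tau>. exp (\<tau> *\<^sub>R \<nu>) * f a \<tau>))"
    by (rule integral_sum[OF A]) (rule integrable_exp_mult[OF f])
  finally show ?thesis unfolding Rg_def by (simp add: sum_distrib_left)
qed

lemma Rg_add:
  fixes h k :: "real \<Rightarrow> 'a::{real_normed_field,banach}"
  assumes h: "continuous_on UNIV h" and k: "continuous_on UNIV k"
  shows "Rg T \<nu> (\<lambda>\<tau>. h \<tau> + k \<tau>) t = Rg T \<nu> h t + Rg T \<nu> k t"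
proof -
  have "integral {t-T..t} (\<lambda>\<tau>. exp (\<tau> *\<^sub>R \<nu>) * (h \<tau> + k \<tau>)) =
        integral {t-T..t} (\<lambda>\<tau>. exp (\<tau> *\<^sub>R \<nu>) * h \<tau> + exp (\<tau> *\<^sub>R \<nu>) * k \<tau>)"
    by (simp add: distrib_left)
  also have "\<dots> = integral {t-T..t} (\<lambda>\<tau>. exp (\<tau> *\<^sub>R \<nu>) * h \<tau>) + integral {t-T..t} (\<lambda>\<tau>. exp (\<tau> *\<^sub>R \<nu>) * k \<tau>)"
    by (rule integral_add; rule integrable_exp_mult; fact)
  finally show ?thesis unfolding Rg_def by (simp add: distrib_left)
qed

lemma Rg_diff:
  fixes h k :: "real \<Rightarrow> 'a::{real_normed_field,banach}"
  assumes h: "continuous_on UNIV h" and k: "continuous_on UNIV k"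
  shows "Rg T \<nu> (\<lambda>\<tau>. h \<tau> - k \<tau>) t = Rg T \<nu> h t - Rg T \<nu> k t"
proof -
  have "integral {t-T..t} (\<lambda>\<tau>. exp (\<tau> *\<^sub>R \<nu>) * (h \<tau> - k \<tau>)) =
        integral {t-T..t} (\<lambda>\<tau>. exp (\<tau> *\<^sub>R \<nu>) * h \<tau> - exp (\<tau> *\<^sub>R \<nu>) * k \<tau>)"
    by (simp add: right_diff_distrib)
  also have "\<dots> = integral {t-T..t} (\<lambda>\<tau>. exp (\<tau> *\<^sub>R \<nu>) * h \<tau>) - integral {t-T..t} (\<lambda>\<tau>. exp (\<tau> *\<^sub>R \<nu>) * k \<tau>)"
    by (rule integral_diff; rule integrable_exp_mult; fact)
  finally show ?thesis unfolding Rg_def by (simp add: right_diff_distrib)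
qed

lemma Rg_cmult:
  fixes h :: "real \<Rightarrow> 'a::{real_normed_field,banach}"
  shows "Rg T \<nu> (\<lambda>\<tau>. c * h \<tau>) t = c * Rg T \<nu> h t"
proof -
  have "integral {t-T..t} (\<lambda>\<tau>. exp (\<tau> *\<^sub>R \<nu>) * (c * h \<tau>)) =
        integral {t-T..t} (\<lambda>\<tau>. c * (exp (\<tau> *\<^sub>R \<nu>) * h \<tau>))"
    by (simp add: algebra_simps)
  also have "\<dots> = c * integral {t-T..t} (\<lambda>\<tau>. exp (\<tau> *\<^sub>R \<nu>) * h \<tau>)"
    by simp
  finally show ?thesis unfolding Rg_def by (simp add: algebra_simps)
qed

lemma Rg_mono:
  fixes h k :: "real \<Rightarrow> real"
  assumes h: "continuous_on UNIV h" and k: "continuous_on UNIV k" and hk: "\<And>\<tau>. h \<tau> \<le> k \<tau>"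
    and T: "T > 0" and lam: "r > 0"
  shows "Rg T r h t \<le> Rg T r k t"
proof -
  have "integral {t-T..t} (\<lambda>\<tau>. exp (\<tau> *\<^sub>R r) * h \<tau>) \<le> integral {t-T..t} (\<lambda>\<tau>. exp (\<tau> *\<^sub>R r) * k \<tau>)"
    by (intro integral_le integrable_exp_mult h k mult_left_mono hk) simp
  moreover have "exp (- (T *\<^sub>R r)) < 1" using T lam by simp
  ultimately show ?thesis unfolding Rg_def
    by (intro mult_left_mono) auto
qed

lemma Rg_const_one:
  assumes T: "T > 0" and lam: "(r::real) > 0"
  shows "Rg T r (\<lambda>_. 1) t = 1 / r"
proof -
  have "(\<lambda>_. 1 / r) t = Rg T r (\<lambda>_. 1) t"
    by (rule Rg_unique[where w'="\<lambda>_. 0"]) (use T lam in auto)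
  then show ?thesis by simp
qed

lemma Rg_norm_bound:
  fixes h :: "real \<Rightarrow> complex"
  assumes h: "continuous_on UNIV h" and T: "T > 0" and nu: "Re \<nu> > 0"
  shows "norm (Rg T \<nu> h t) \<le> Rg T (Re \<nu>) (\<lambda>\<tau>. norm (h \<tau>)) t"
proof -
  have "T * Re \<nu> > 0" using T nu by simp
  then have e: "exp (- (T * Re \<nu>)) < 1" by simp
  have "1 - exp (- (T * Re \<nu>)) \<le> norm (1 - exp (- (T *\<^sub>R \<nu>)))"
    using norm_triangle_ineq2[of 1 "exp (- (T *\<^sub>R \<nu>))"] by simp
  then have n1: "norm (1 / (1 - exp (- (T *\<^sub>R \<nu>)))) \<le> 1 / (1 - exp (- (T * Re \<nu>)))"
    using e by (simp add: norm_divide divide_simps)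
  have n2: "norm (integral {t-T..t} (\<lambda>\<tau>. exp (\<tau> *\<^sub>R \<nu>) * h \<tau>)) \<le>
      integral {t-T..t} (\<lambda>\<tau>. exp (\<tau> *\<^sub>R Re \<nu>) * norm (h \<tau>))"
    by (intro integral_norm_bound_integral integrable_exp_mult h continuous_on_norm)
       (simp add: norm_mult)
  have "norm (Rg T \<nu> h t) \<le> (1 / (1 - exp (- (T * Re \<nu>)))) *
      (exp (- (t * Re \<nu>)) * integral {t-T..t} (\<lambda>\<tau>. exp (\<tau> *\<^sub>R Re \<nu>) * norm (h \<tau>)))"
    unfolding Rg_def norm_mult
    using \<open>T * Re \<nu> > 0\<close>
    by (intro mult_mono n1 n2) (auto intro!: integral_nonneg integrable_exp_mult continuous_on_norm h)
  then show ?thesis by (simp add: Rg_def)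
qed

lemma vec_sum_axis: "(\<chi> i. g i) = (\<Sum>i\<in>UNIV. axis i (g i) :: 'a::comm_monoid_add^'m::finite)"
  by (simp add: vec_eq_iff axis_def sum_component if_distrib cong: if_cong)
lemma has_vector_derivative_vec:
  fixes g :: "'m::finite \<Rightarrow> real \<Rightarrow> 'a::real_normed_vector"
  assumes "\<And>i. (g i has_vector_derivative g' i) F"
  shows "((\<lambda>t. \<chi> i. g i t) has_vector_derivative (\<chi> i. g' i)) F"
proof -
  have bl: "bounded_linear (axis i :: 'a \<Rightarrow> 'a^'m)" for i
  proof (rule bounded_linear_intro[where K=1])
    fix x :: 'a
    have "norm (axis i x :: 'a^'m) \<le> (\<Sum>j\<in>UNIV. norm (axis i x $ j :: 'a))"
      unfolding norm_vec_def by (rule L2_set_le_sum) simp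
    also have "\<dots> = norm x" by (simp add: axis_def if_distrib cong: if_cong)
    finally show "norm (axis i x :: 'a^'m) \<le> norm x * 1" by simp
  qed (auto simp: axis_def vec_eq_iff)
  have "((\<lambda>t. \<Sum>i\<in>UNIV. axis i (g i t)) has_vector_derivative (\<Sum>i\<in>UNIV. axis i (g' i))) F"
    by (intro has_vector_derivative_sum bounded_linear.has_vector_derivative[OF bl] assms)
  then show ?thesis by (simp add: vec_sum_axis[symmetric])
qed

lemma periodic_shift_nat:
  fixes f :: "real \<Rightarrow> 'a" and T :: real
  assumes p: "\<And>t. f (t + T) = f t"
  shows "f (t + real n * T) = f t"
proof (induction n)
  case (Suc n)
  have "f (t + real (Suc n) * T) = f ((t + real n * T) + T)" by (simp add: algebra_simps)
  also have "\<dots> = f t" using p Suc by simp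
  finally show ?case .
qed simp

lemma periodic_reduce:
  fixes f :: "real \<Rightarrow> 'a" and T :: real
  assumes T: "T > 0" and p: "\<And>t. f (t + T) = f t"
  shows "\<exists>t'\<in>{0..T}. f t = f t'"
proof -
  define k where "k = floor (t / T)"
  define t' where "t' = t - of_int k * T"
  have "of_int k \<le> t / T" "t / T < of_int k + 1" unfolding k_def by linarith+
  then have "of_int k * T \<le> t" "t < (of_int k + 1) * T" using T by (simp_all add: field_simps)
  then have t'I: "t' \<in> {0..T}" unfolding t'_def by (auto simp: algebra_simps)
  show ?thesis
  proof (cases "k \<ge> 0")
    case True
    then have "t = t' + real (nat k) * T" unfolding t'_def by simp
    then have "f t = f t'" using periodic_shift_nat[of f T t' "nat k", OF p] by simp
    then show ?thesis using t'I by blast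
  next
    case False
    then have "t' = t + real (nat (- k)) * T" unfolding t'_def by simp
    then have "f t' = f t" using periodic_shift_nat[of f T t "nat (-k)", OF p] by simp
    then show ?thesis using t'I by metis
  qed
qed

lemma periodic_bounded:
  fixes f :: "real \<Rightarrow> 'a::real_normed_vector"
  assumes T: "T > 0" and p: "\<And>t. f (t + T) = f t" and c: "continuous_on UNIV f"
  shows "\<exists>B. \<forall>t. norm (f t) \<le> B"
proof -
  have "compact (f ` {0..T})"
    by (intro compact_continuous_image continuous_on_subset[OF c]) auto
  then obtain B where B: "\<And>y. y \<in> f ` {0..T} \<Longrightarrow> norm y \<le> B"
    using compact_imp_bounded bounded_iff by metis
  show ?thesis
  proof (intro exI allI)
    fix t
    obtain t' where "t' \<in> {0..T}" "f t = f t'" using periodic_reduce[where f=f and t=t, OF T p] by blast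
    then show "norm (f t) \<le> B" using B by auto
  qed
qed

lemma periodic2_min:
  fixes g :: "'a::topological_space \<times> real \<Rightarrow> real"
  assumes T: "T > 0" and K: "compact K" "K \<noteq> {}" and c: "continuous_on (K \<times> UNIV) g"
    and p: "\<And>x t. x \<in> K \<Longrightarrow> g (x, t + T) = g (x, t)"
  shows "\<exists>q\<in>K \<times> UNIV. \<forall>x\<in>K. \<forall>t. g q \<le> g (x, t)"
proof -
  have "\<exists>q\<in>K \<times> {0..T}. \<forall>y\<in>K \<times> {0..T}. g q \<le> g y"
    using T K by (intro continuous_attains_inf compact_Times continuous_on_subset[OF c]) auto
  then obtain q where q: "q \<in> K \<times> {0..T}" "\<And>y. y \<in> K \<times> {0..T} \<Longrightarrow> g q \<le> g y" by blast
  show ?thesis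
  proof (intro bexI ballI allI)
    fix x t assume x: "x \<in> K"
    obtain t' where "t' \<in> {0..T}" "g (x, t) = g (x, t')"
      using periodic_reduce[OF T, of "\<lambda>t. g (x, t)"] p[OF x] by blast
    then show "g q \<le> g (x, t)" using q(2)[of "(x, t')"] x by auto
  qed (use q in auto)
qed

definition PopL :: "('m::finite \<Rightarrow> 'm \<Rightarrow> real \<Rightarrow> real) \<Rightarrow> (real \<Rightarrow> complex^'m) \<Rightarrow> real \<Rightarrow> complex^'m" where
  "PopL L \<phi> = (\<lambda>t. \<chi> i. - (vector_derivative \<phi> (at t) $ i) + (\<Sum>k\<in>UNIV. complex_of_real (L i k t) * \<phi> t $ k))"

locale odeR =
  fixes T :: real and L :: "'m::finite \<Rightarrow> 'm \<Rightarrow> real \<Rightarrow> real"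
    and u u' g :: "'m \<Rightarrow> real \<Rightarrow> real" and s \<gamma> a M :: real
  assumes T: "T > 0"
    and Lc: "\<And>i k. continuous_on UNIV (L i k)"
    and Lp: "\<And>i k t. L i k (t + T) = L i k t"
    and Loff: "\<And>i k t. i \<noteq> k \<Longrightarrow> L i k t \<ge> 0"
    and ud: "\<And>i t. (u i has_real_derivative u' i t) (at t)"
    and u'c: "\<And>i. continuous_on UNIV (u' i)"
    and up: "\<And>i t. u i (t + T) = u i t"
    and ueq: "\<And>i t. u' i t = (\<Sum>k\<in>UNIV. L i k t * u k t) - s * u i t + g i t"
    and a: "a > 0" and ua: "\<And>i t. a \<le> u i t" and uM: "\<And>i t. u i t \<le> M"
    and gam: "\<gamma> > 0" and gu: "\<And>i t. \<gamma> * u i t \<le> g i t"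

locale odeRmu = odeR +
  fixes \<mu> :: complex and c :: real
  assumes mu: "Re \<mu> > s - \<gamma>" and cL: "\<And>i t. 0 \<le> L i i t + c" and cpos: "Re \<mu> + c > 0"
begin

definition "r = Re \<mu> + c"
definition "\<nu> = \<mu> + complex_of_real c"
definition "Lc i k t = L i k t + (if i = k then c else 0)"
definition "\<epsilon>0 = (Re \<mu> - s + \<gamma>) * a"
definition "\<eta> = min (\<epsilon>0 / (r * M)) (1/2)"
definition "q = 1 - \<eta>"
definition "Bop h = (\<lambda>t. \<chi> i. Rg T \<nu> (\<lambda>\<tau>. \<Sum>k\<in>UNIV. complex_of_real (Lc i k \<tau>) * h \<tau> $ k) t)"
definition "RV \<psi> = (\<lambda>t. \<chi> i. Rg T \<nu> (\<lambda>\<tau>. \<psi> \<tau> $ i) t)"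

lemma r_pos: "r > 0" using cpos by (simp add: r_def)
lemma Re_nu: "Re \<nu> = r" by (simp add: r_def \<nu>_def)
lemma M_pos: "M > 0" using a ua[of undefined 0] uM[of undefined 0] by linarith
lemma eps0_pos: "\<epsilon>0 > 0" using mu a by (simp add: \<epsilon>0_def)
lemma eta_pos: "\<eta> > 0" using eps0_pos r_pos M_pos by (simp add: \<eta>_def)
lemma eta_le: "\<eta> \<le> 1/2" unfolding \<eta>_def by (rule min.cobounded2)
lemma q_bounds: "q < 1" "q \<ge> 1/2" using eta_pos eta_le by (auto simp: q_def)

lemma ne_nu: "exp (- (T *\<^sub>R \<nu>)) \<noteq> 1"
proof -
  have "T * r > 0" using T r_pos by simp
  then have "T * Re \<nu> > 0" using Re_nu by simp
  moreover have "norm (exp (- (T *\<^sub>R \<nu>))) = exp (- (T * r))" using Re_nu by simp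
  ultimately have "norm (exp (- (T *\<^sub>R \<nu>))) < 1" by simp
  then show ?thesis by (metis norm_one less_irrefl)
qed

lemma ne_r: "exp (- (T *\<^sub>R r)) \<noteq> 1"
proof -
  show ?thesis using T r_pos by simp
qed

lemma Lc_nonneg: "0 \<le> Lc i k t"
  using Loff[of i k t] cL[of i t] by (auto simp: Lc_def)

lemma Lc_cont: "continuous_on UNIV (Lc i k)"
  unfolding Lc_def by (intro continuous_intros Lc)

lemma Lc_per: "Lc i k (t + T) = Lc i k t"
  by (simp add: Lc_def Lp)

lemma u_cont: "continuous_on UNIV (u i)"
  by (rule continuous_at_imp_continuous_on) (use ud DERIV_isCont in blast)

lemma g_eq: "g i t = u' i t - (\<Sum>k\<in>UNIV. L i k t * u k t) + s * u i t"
  using ueq[of i t] by simp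

lemma g_cont: "continuous_on UNIV (g i)"
proof -
  have "continuous_on UNIV (\<lambda>t. u' i t - (\<Sum>k\<in>UNIV. L i k t * u k t) + s * u i t)"
    by (intro continuous_intros u'c Lc u_cont)
  then show ?thesis by (simp add: g_eq[abs_def])
qed

lemma u_rep:
  "u i t = Rg T r (\<lambda>\<tau>. (\<Sum>k\<in>UNIV. Lc i k \<tau> * u k \<tau>) + ((Re \<mu> - s) * u i \<tau> + g i \<tau>)) t"
proof (rule Rg_unique[where w="u i" and w'="u' i" and T=T and \<nu>=r])
  show "T > 0" by (rule T)
  show "exp (- (T *\<^sub>R r)) \<noteq> 1" by (rule ne_r)
  show "u i (t + T) = u i t" for t by (rule up)
  show "(u i has_vector_derivative u' i t) (at t)" for t
    using ud by (simp add: has_real_derivative_iff_has_vector_derivative)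
  show "u' i t + r * u i t = (\<Sum>k\<in>UNIV. Lc i k t * u k t) + ((Re \<mu> - s) * u i t + g i t)" for t
  proof -
    have "(\<Sum>k\<in>UNIV. Lc i k t * u k t) = (\<Sum>k\<in>UNIV. L i k t * u k t) + c * u i t"
    proof -
      have "\<And>k. Lc i k t * u k t = L i k t * u k t + (if k = i then c * u i t else 0)"
        by (auto simp: Lc_def algebra_simps)
      then show ?thesis by (simp add: sum.distrib)
    qed
    then show ?thesis using ueq[of i t] by (simp add: r_def algebra_simps)
  qed
qed

lemma key:
  "Rg T r (\<lambda>\<tau>. \<Sum>k\<in>UNIV. Lc i k \<tau> * u k \<tau>) t \<le> q * u i t"
proof -
  let ?S = "\<lambda>\<tau>. \<Sum>k\<in>UNIV. Lc i k \<tau> * u k \<tau>"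
  let ?e = "\<lambda>\<tau>. (Re \<mu> - s) * u i \<tau> + g i \<tau>"
  have Sc: "continuous_on UNIV ?S" by (intro continuous_intros Lc_cont u_cont)
  have ec: "continuous_on UNIV ?e" by (intro continuous_intros u_cont g_cont)
  have "u i t = Rg T r ?S t + Rg T r ?e t"
    using u_rep[of i t] Rg_add[OF Sc ec, of T r t] by simp
  moreover have "\<epsilon>0 / r \<le> Rg T r ?e t"
  proof -
    have "\<epsilon>0 \<le> ?e \<tau>" for \<tau>
    proof -
      have "\<epsilon>0 \<le> (Re \<mu> - s + \<gamma>) * u i \<tau>"
        unfolding \<epsilon>0_def using mu ua[of i \<tau>] by (intro mult_left_mono) auto
      also have "\<dots> \<le> ?e \<tau>" using gu[of i \<tau>] by (simp add: algebra_simps)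
      finally show ?thesis .
    qed
    then have "Rg T r (\<lambda>\<tau>. \<epsilon>0 * 1) t \<le> Rg T r ?e t"
      by (intro Rg_mono ec T r_pos) (auto intro: continuous_intros)
    then show ?thesis using Rg_cmult[of T r \<epsilon>0 "\<lambda>_. 1" t] Rg_const_one[OF T r_pos, of t] by simp
  qed
  moreover have "\<eta> * u i t \<le> \<epsilon>0 / r"
  proof -
    have "\<eta> * u i t \<le> (\<epsilon>0 / (r * M)) * M"
      using eta_pos uM[of i t] a ua[of i t] by (intro mult_mono) (auto simp: \<eta>_def)
    also have "\<dots> = \<epsilon>0 / r" using M_pos by simp
    finally show ?thesis .
  qed
  ultimately show ?thesis by (simp add: q_def algebra_simps)
qed


lemma H_cont:
  assumes h: "continuous_on UNIV h"
  shows "continuous_on UNIV (\<lambda>\<tau>. \<Sum>k\<in>UNIV. complex_of_real (Lc i k \<tau>) * h \<tau> $ k)"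
  by (intro continuous_intros continuous_on_component h Lc_cont)

lemma wb:
  assumes h: "continuous_on UNIV h" and hb: "\<And>k \<tau>. norm (h \<tau> $ k) \<le> K * u k \<tau>"
  shows "norm (Bop h t $ i) \<le> K * q * u i t"
proof -
  have "norm (h t $ i) \<le> K * u i t" by (rule hb)
  then have "0 \<le> K * u i t" using norm_ge_zero order_trans by blast
  then have K0: "K \<ge> 0" using a ua[of i t] by (simp add: zero_le_mult_iff)
  let ?H = "\<lambda>\<tau>. \<Sum>k\<in>UNIV. complex_of_real (Lc i k \<tau>) * h \<tau> $ k"
  let ?S = "\<lambda>\<tau>. \<Sum>k\<in>UNIV. Lc i k \<tau> * u k \<tau>"
  have Hc: "continuous_on UNIV ?H" by (rule H_cont[OF h])
  have pw: "norm (?H \<tau>) \<le> K * ?S \<tau>" for \<tau>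
  proof -
    have "norm (?H \<tau>) \<le> (\<Sum>k\<in>UNIV. norm (complex_of_real (Lc i k \<tau>) * h \<tau> $ k))"
      by (rule norm_sum)
    also have "\<dots> = (\<Sum>k\<in>UNIV. Lc i k \<tau> * norm (h \<tau> $ k))"
      using Lc_nonneg by (simp add: norm_mult)
    also have "\<dots> \<le> (\<Sum>k\<in>UNIV. Lc i k \<tau> * (K * u k \<tau>))"
      by (intro sum_mono mult_left_mono hb Lc_nonneg)
    also have "\<dots> = K * ?S \<tau>" by (simp add: sum_distrib_left algebra_simps)
    finally show ?thesis .
  qed
  have "norm (Bop h t $ i) = norm (Rg T \<nu> ?H t)" by (simp add: Bop_def)
  also have "\<dots> \<le> Rg T (Re \<nu>) (\<lambda>\<tau>. norm (?H \<tau>)) t"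
    by (rule Rg_norm_bound[OF Hc T]) (simp add: Re_nu r_pos)
  also have "\<dots> \<le> Rg T r (\<lambda>\<tau>. K * ?S \<tau>) t"
    unfolding Re_nu
    by (rule Rg_mono[OF _ _ pw T r_pos]) (intro continuous_intros Hc Lc_cont u_cont)+
  also have "\<dots> = K * Rg T r ?S t" by (rule Rg_cmult)
  also have "\<dots> \<le> K * (q * u i t)" by (rule mult_left_mono[OF key K0])
  finally show ?thesis by (simp add: mult.assoc)
qed

lemma supb:
  assumes h: "continuous_on UNIV h" and hb: "\<And>\<tau>. norm (h \<tau>) \<le> e"
  shows "norm (Bop h t $ i) \<le> e * M / a"
proof -
  have e0: "e \<ge> 0" using hb[of 0] norm_ge_zero order_trans by blast
  have "norm (h \<tau> $ k) \<le> (e / a) * u k \<tau>" for k \<tau>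
  proof -
    have "norm (h \<tau> $ k) \<le> norm (h \<tau>)" by (rule Finite_Cartesian_Product.norm_nth_le)
    then have "norm (h \<tau> $ k) \<le> e" using hb[of \<tau>] by linarith
    also have "e = (e / a) * a" using a by simp
    also have "\<dots> \<le> (e / a) * u k \<tau>" using e0 a ua[of k \<tau>] by (intro mult_left_mono) auto
    finally show ?thesis .
  qed
  then have "norm (Bop h t $ i) \<le> (e / a) * q * u i t" by (rule wb[OF h])
  also have "\<dots> \<le> (e / a) * 1 * M"
    using e0 a q_bounds uM[of i t] ua[of i t] by (intro mult_mono) auto
  finally show ?thesis by simp
qed

lemma Bop_Xode:
  assumes h: "h \<in> Xode T"
  shows "Bop h \<in> Xode T"
proof -
  have hc: "continuous_on UNIV h" and hp: "\<And>t. h (t + T) = h t" using h by (auto simp: Xode_def)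
  have Hp: "(\<lambda>\<tau>. \<Sum>k\<in>UNIV. complex_of_real (Lc i k \<tau>) * h \<tau> $ k) (t + T) =
            (\<lambda>\<tau>. \<Sum>k\<in>UNIV. complex_of_real (Lc i k \<tau>) * h \<tau> $ k) t" for i t
    by (simp add: Lc_per hp)
  show ?thesis unfolding Xode_def Bop_def
  proof (intro CollectI conjI allI continuous_on_vec_lambda)
    show "continuous_on UNIV (Rg T \<nu> (\<lambda>\<tau>. \<Sum>k\<in>UNIV. complex_of_real (Lc i k \<tau>) * h \<tau> $ k))" for i
      by (rule Rg_cont[OF H_cont[OF hc] Hp T ne_nu])
    show "(\<chi> i. Rg T \<nu> (\<lambda>\<tau>. \<Sum>k\<in>UNIV. complex_of_real (Lc i k \<tau>) * h \<tau> $ k) (t + T)) =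
          (\<chi> i. Rg T \<nu> (\<lambda>\<tau>. \<Sum>k\<in>UNIV. complex_of_real (Lc i k \<tau>) * h \<tau> $ k) t)" for t
    proof -
      have "Rg T \<nu> (\<lambda>\<tau>. \<Sum>k\<in>UNIV. complex_of_real (Lc i k \<tau>) * h \<tau> $ k) (t + T) =
            Rg T \<nu> (\<lambda>\<tau>. \<Sum>k\<in>UNIV. complex_of_real (Lc i k \<tau>) * h \<tau> $ k) t" for i
        by (rule Rg_periodic) (simp add: Lc_per hp)
      then show ?thesis by simp
    qed
  qed
qed

lemma RV_Xode:
  assumes h: "h \<in> Xode T"
  shows "RV h \<in> Xode T"
proof -
  have hc: "continuous_on UNIV h" and hp: "\<And>t. h (t + T) = h t" using h by (auto simp: Xode_def)
  show ?thesis unfolding Xode_def RV_def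
  proof (intro CollectI conjI allI continuous_on_vec_lambda)
    show "continuous_on UNIV (Rg T \<nu> (\<lambda>\<tau>. h \<tau> $ i))" for i
      by (rule Rg_cont[OF continuous_on_component[OF hc] _ T ne_nu]) (simp add: hp)
    show "(\<chi> i. Rg T \<nu> (\<lambda>\<tau>. h \<tau> $ i) (t + T)) = (\<chi> i. Rg T \<nu> (\<lambda>\<tau>. h \<tau> $ i) t)" for t
    proof -
      have "Rg T \<nu> (\<lambda>\<tau>. h \<tau> $ i) (t + T) = Rg T \<nu> (\<lambda>\<tau>. h \<tau> $ i) t" for i
        by (rule Rg_periodic) (simp add: hp)
      then show ?thesis by simp
    qed
  qed
qed

lemma Bop_diff:
  assumes h1: "continuous_on UNIV h1" and h2: "continuous_on UNIV h2"
  shows "Bop (\<lambda>t. h1 t - h2 t) t = Bop h1 t - Bop h2 t"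
proof -
  have "(\<lambda>\<tau>. \<Sum>k\<in>UNIV. complex_of_real (Lc i k \<tau>) * (h1 \<tau> - h2 \<tau>) $ k) =
        (\<lambda>\<tau>. (\<Sum>k\<in>UNIV. complex_of_real (Lc i k \<tau>) * h1 \<tau> $ k) - (\<Sum>k\<in>UNIV. complex_of_real (Lc i k \<tau>) * h2 \<tau> $ k))" for i
    by (simp add: right_diff_distrib sum_subtractf)
  then show ?thesis
    by (simp add: Bop_def vec_eq_iff Rg_diff[OF H_cont[OF h1] H_cont[OF h2]])
qed

lemma Bop_sum:
  fixes n :: nat
  assumes f: "\<And>j. continuous_on UNIV (f j)"
  shows "Bop (\<lambda>t. \<Sum>j<n. f j t) t = (\<Sum>j<n. Bop (f j) t)"
proof -
  have "(\<lambda>\<tau>. \<Sum>k\<in>UNIV. complex_of_real (Lc i k \<tau>) * (\<Sum>j<n. f j \<tau>) $ k) =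
        (\<lambda>\<tau>. \<Sum>j<n. \<Sum>k\<in>UNIV. complex_of_real (Lc i k \<tau>) * f j \<tau> $ k)" for i
    by (simp add: sum_component sum_distrib_left sum.swap[of _ "{..<n}"])
  moreover have "Rg T \<nu> (\<lambda>\<tau>. \<Sum>j<n. \<Sum>k\<in>UNIV. complex_of_real (Lc i k \<tau>) * f j \<tau> $ k) t =
     (\<Sum>j<n. Rg T \<nu> (\<lambda>\<tau>. \<Sum>k\<in>UNIV. complex_of_real (Lc i k \<tau>) * f j \<tau> $ k) t)" for i
    by (rule Rg_sum) (auto intro: H_cont f simp del: lessThan_iff)
  ultimately show ?thesis
    by (simp add: Bop_def vec_eq_iff sum_component)
qed


lemma Lc_sum:
  "(\<Sum>k\<in>UNIV. complex_of_real (Lc i k t) * z k) =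
   (\<Sum>k\<in>UNIV. complex_of_real (L i k t) * z k) + complex_of_real c * z i"
proof -
  have "\<And>k. complex_of_real (Lc i k t) * z k =
      complex_of_real (L i k t) * z k + (if k = i then complex_of_real c * z i else 0)"
    by (auto simp: Lc_def algebra_simps)
  then show ?thesis by (simp add: sum.distrib)
qed

lemma norm_vec_le_sum: "norm (x :: 'b::real_normed_vector^'n::finite) \<le> (\<Sum>i\<in>UNIV. norm (x $ i))"
  unfolding norm_vec_def by (rule L2_set_le_sum) simp

lemma comp_deriv:
  assumes "(\<phi> has_vector_derivative \<phi>') (at t)"
  shows "((\<lambda>t. \<phi> t $ i) has_vector_derivative \<phi>' $ i) (at t)"
  using bounded_linear.has_vector_derivative[OF bounded_linear_vec_nth assms] by simp

lemma Xode_bounded: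
  assumes "f \<in> Xode T"
  shows "\<exists>B. \<forall>t. norm (f t) \<le> B"
  using assms periodic_bounded[OF T, of f] by (auto simp: Xode_def)

lemma supn_upper:
  assumes "\<And>t. norm (f t) \<le> B"
  shows "norm (f t) \<le> supn UNIV f"
  unfolding supn_def by (rule cSUP_upper) (use assms in \<open>auto intro!: bdd_aboveI[where M=B]\<close>)

lemma supn_least:
  assumes "\<And>t. norm (f t) \<le> B"
  shows "supn UNIV f \<le> B"
  unfolding supn_def by (rule cSUP_least) (use assms in auto)


lemma PopL_comp:
  assumes "(\<phi> has_vector_derivative \<phi>' t) (at t)"
  shows "(cscale \<mu> (\<phi> t) - PopL L \<phi> t) $ i =
     \<mu> * \<phi> t $ i + \<phi>' t $ i - (\<Sum>k\<in>UNIV. complex_of_real (L i k t) * \<phi> t $ k)"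
  using vector_derivative_at[OF assms] by (simp add: cscale_def PopL_def)

lemma apriori:
  fixes \<phi> :: "real \<Rightarrow> complex^'a"
  assumes \<phi>: "\<phi> \<in> Dode T"
  shows "supn UNIV \<phi> \<le> (real CARD('a) * M / (r * a * (1 - q))) * supn UNIV (\<lambda>t. cscale \<mu> (\<phi> t) - PopL L \<phi> t)"
proof -
  obtain \<phi>' where \<phi>'X: "\<phi>' \<in> Xode T" and \<phi>d: "\<And>t. (\<phi> has_vector_derivative \<phi>' t) (at t)"
    using \<phi> by (auto simp: Dode_def)
  have \<phi>X: "\<phi> \<in> Xode T" using \<phi> by (simp add: Dode_def)
  have \<phi>c: "continuous_on UNIV \<phi>" and \<phi>p: "\<And>t. \<phi> (t + T) = \<phi> t" using \<phi>X by (auto simp: Xode_def)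
  have \<phi>'c: "continuous_on UNIV \<phi>'" and \<phi>'p: "\<And>t. \<phi>' (t + T) = \<phi>' t" using \<phi>'X by (auto simp: Xode_def)
  define \<psi> where "\<psi> = (\<lambda>t. cscale \<mu> (\<phi> t) - PopL L \<phi> t)"
  have \<psi>i: "\<psi> t $ i = \<mu> * \<phi> t $ i + \<phi>' t $ i - (\<Sum>k\<in>UNIV. complex_of_real (L i k t) * \<phi> t $ k)" for t i
    unfolding \<psi>_def by (rule PopL_comp[OF \<phi>d])
  have \<psi>eq: "\<psi> = (\<lambda>t. \<chi> i. \<mu> * \<phi> t $ i + \<phi>' t $ i - (\<Sum>k\<in>UNIV. complex_of_real (L i k t) * \<phi> t $ k))"
    by (rule ext) (simp add: vec_eq_iff \<psi>i)
  have \<psi>c: "continuous_on UNIV \<psi>"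
    unfolding \<psi>eq by (intro continuous_on_vec_lambda continuous_intros continuous_on_component \<phi>c \<phi>'c Lc)
  obtain B\<psi> where B\<psi>: "\<And>t. norm (\<psi> t) \<le> B\<psi>"
  proof -
    have "\<psi> \<in> Xode T" unfolding Xode_def using \<psi>c by (simp add: \<psi>eq \<phi>p \<phi>'p Lp)
    then show ?thesis using Xode_bounded that by blast
  qed
  define S\<psi> where "S\<psi> = supn UNIV \<psi>"
  have \<psi>S: "norm (\<psi> t $ i) \<le> S\<psi>" for t i
    using Finite_Cartesian_Product.norm_nth_le[of "\<psi> t" i] supn_upper[where f=\<psi> and t=t, OF B\<psi>] by (simp add: S\<psi>_def)
  have S0: "S\<psi> \<ge> 0" using \<psi>S[of 0 undefined] norm_ge_zero order_trans by blast
  have rep: "\<phi> t $ i = Rg T \<nu> (\<lambda>\<tau>. \<psi> \<tau> $ i) t + Bop \<phi> t $ i" for t i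
  proof -
    have "\<phi> t $ i = Rg T \<nu> (\<lambda>\<tau>. \<psi> \<tau> $ i + (\<Sum>k\<in>UNIV. complex_of_real (Lc i k \<tau>) * \<phi> \<tau> $ k)) t"
    proof (rule Rg_unique[where w="\<lambda>t. \<phi> t $ i" and w'="\<lambda>t. \<phi>' t $ i" and T=T and \<nu>=\<nu>])
      show "T > 0" by (rule T)
      show "exp (- (T *\<^sub>R \<nu>)) \<noteq> 1" by (rule ne_nu)
      show "\<phi> (t + T) $ i = \<phi> t $ i" for t by (simp add: \<phi>p)
      show "((\<lambda>t. \<phi> t $ i) has_vector_derivative \<phi>' t $ i) (at t)" for t by (rule comp_deriv[OF \<phi>d])
      show "\<phi>' t $ i + \<nu> * \<phi> t $ i = \<psi> t $ i + (\<Sum>k\<in>UNIV. complex_of_real (Lc i k t) * \<phi> t $ k)" for t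
        using Lc_sum[of i t "\<lambda>k. \<phi> t $ k"] by (simp add: \<psi>i \<nu>_def algebra_simps)
    qed
    also have "\<dots> = Rg T \<nu> (\<lambda>\<tau>. \<psi> \<tau> $ i) t + Bop \<phi> t $ i"
      unfolding Bop_def
      by (simp add: Rg_add[OF continuous_on_component[OF \<psi>c] H_cont[OF \<phi>c]])
    finally show ?thesis .
  qed
  have Rb: "norm (Rg T \<nu> (\<lambda>\<tau>. \<psi> \<tau> $ i) t) \<le> S\<psi> / r" for t i
  proof -
    have "norm (Rg T \<nu> (\<lambda>\<tau>. \<psi> \<tau> $ i) t) \<le> Rg T (Re \<nu>) (\<lambda>\<tau>. norm (\<psi> \<tau> $ i)) t"
      by (rule Rg_norm_bound[OF continuous_on_component[OF \<psi>c] T]) (simp add: Re_nu r_pos)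
    also have "\<dots> \<le> Rg T r (\<lambda>\<tau>. S\<psi> * 1) t"
      unfolding Re_nu
      by (rule Rg_mono[OF _ _ _ T r_pos]) (auto intro!: continuous_intros continuous_on_component \<psi>c \<psi>S)
    also have "\<dots> = S\<psi> / r" using Rg_cmult[of T r S\<psi> "\<lambda>_. 1" t] Rg_const_one[OF T r_pos, of t] by simp
    finally show ?thesis .
  qed
  obtain B\<phi> where B\<phi>: "\<And>t. norm (\<phi> t) \<le> B\<phi>" using Xode_bounded[OF \<phi>X] by blast
  define F where "F = (\<lambda>p::'a \<times> real. norm (\<phi> (snd p) $ fst p) / u (fst p) (snd p))"
  define K where "K = Sup (range F)"
  have Fb: "F p \<le> B\<phi> / a" for p
  proof -
    have "norm (\<phi> (snd p) $ fst p) \<le> B\<phi>"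
      using Finite_Cartesian_Product.norm_nth_le[of "\<phi> (snd p)" "fst p"] B\<phi>[of "snd p"] by linarith
    moreover have "0 \<le> B\<phi>" using B\<phi>[of 0] norm_ge_zero order_trans by blast
    ultimately show ?thesis unfolding F_def using a ua[of "fst p" "snd p"]
      by (intro frac_le) auto
  qed
  have bdd: "bdd_above (range F)" by (rule bdd_aboveI[where M="B\<phi> / a"]) (use Fb in auto)
  have FK: "F p \<le> K" for p unfolding K_def by (rule cSUP_upper[OF _ bdd]) simp
  have wK: "norm (\<phi> \<tau> $ k) \<le> K * u k \<tau>" for k \<tau>
    using FK[of "(k, \<tau>)"] a ua[of k \<tau>] by (simp add: F_def pos_divide_le_eq)
  have step: "F p \<le> S\<psi> / (r * a) + q * K" for p
  proof -
    obtain i t where p: "p = (i, t)" by (cases p)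
    have "norm (\<phi> t $ i) \<le> S\<psi> / r + K * q * u i t"
      using rep[of t i] Rb[of i t] wb[OF \<phi>c wK, of t i] norm_triangle_ineq[of "Rg T \<nu> (\<lambda>\<tau>. \<psi> \<tau> $ i) t" "Bop \<phi> t $ i"]
      by simp
    then have "norm (\<phi> t $ i) / u i t \<le> (S\<psi> / r + K * q * u i t) / u i t"
      using a ua[of i t] by (intro divide_right_mono) auto
    also have "\<dots> = (S\<psi> / r) / u i t + K * q"
      using a ua[of i t] by (simp add: add_divide_distrib)
    finally have "norm (\<phi> t $ i) / u i t \<le> (S\<psi> / r) / u i t + K * q" .
    also have "(S\<psi> / r) / u i t \<le> (S\<psi> / r) / a"
      using a ua[of i t] S0 r_pos by (intro divide_left_mono) auto
    finally show ?thesis using p by (simp add: F_def algebra_simps)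
  qed
  have "Sup (range F) \<le> S\<psi> / (r * a) + q * K" by (rule cSUP_least) (use step in auto)
  then have "(1 - q) * K \<le> S\<psi> / (r * a)" unfolding K_def[symmetric] by (simp add: algebra_simps)
  moreover have "1 - q > 0" using q_bounds by simp
  ultimately have "K \<le> (S\<psi> / (r * a)) / (1 - q)" by (metis pos_le_divide_eq mult.commute)
  then have Kb: "K \<le> S\<psi> / (r * a * (1 - q))" by (simp add: divide_divide_eq_left)
  have "norm (\<phi> t) \<le> (real CARD('a) * M / (r * a * (1 - q))) * S\<psi>" for t
  proof -
    have "norm (\<phi> t) \<le> (\<Sum>i\<in>UNIV. norm (\<phi> t $ i))" by (rule norm_vec_le_sum)
    also have "\<dots> \<le> (\<Sum>i\<in>(UNIV::'a set). S\<psi> / (r * a * (1 - q)) * M)"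
    proof (rule sum_mono)
      fix i
      have "0 \<le> F (i, t)" unfolding F_def using a ua[of i t] by simp
      then have K0: "0 \<le> K" using FK[of "(i,t)"] by linarith
      have "norm (\<phi> t $ i) \<le> K * u i t" by (rule wK)
      also have "\<dots> \<le> S\<psi> / (r * a * (1 - q)) * M"
        using Kb K0 uM[of i t] a ua[of i t] by (intro mult_mono) auto
      finally show "norm (\<phi> t $ i) \<le> S\<psi> / (r * a * (1 - q)) * M" .
    qed
    also have "\<dots> = (real CARD('a) * M / (r * a * (1 - q))) * S\<psi>" by simp
    finally show ?thesis .
  qed
  then show ?thesis unfolding S\<psi>_def \<psi>_def[symmetric] by (rule supn_least)
qed


lemma exist:
  fixes \<psi> :: "real \<Rightarrow> complex^'a"
  assumes \<psi>X: "\<psi> \<in> Xode T"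
  shows "\<exists>\<phi>\<in>Dode T. \<forall>t. cscale \<mu> (\<phi> t) - PopL L \<phi> t = \<psi> t"
proof -
  have \<psi>c: "continuous_on UNIV \<psi>" and \<psi>p: "\<And>t. \<psi> (t + T) = \<psi> t" using \<psi>X by (auto simp: Xode_def)
  define r0 where "r0 = RV \<psi>"
  have r0X: "r0 \<in> Xode T" using RV_Xode[OF \<psi>X] by (simp add: r0_def)
  obtain Br where Br: "\<And>t. norm (r0 t) \<le> Br" using Xode_bounded[OF r0X] by blast
  have Br0: "Br \<ge> 0" using Br[of 0] norm_ge_zero order_trans by blast
  define K0 where "K0 = Br / a"
  have K00: "K0 \<ge> 0" using Br0 a by (simp add: K0_def)
  define hs where "hs n = (Bop ^^ n) r0" for n
  have hs_Suc: "hs (Suc n) = Bop (hs n)" for n by (simp add: hs_def)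
  have hsI: "hs n \<in> Xode T \<and> (\<forall>k \<tau>. norm (hs n \<tau> $ k) \<le> K0 * q ^ n * u k \<tau>)" for n
  proof (induction n)
    case 0
    have "norm (r0 \<tau> $ k) \<le> K0 * u k \<tau>" for k \<tau>
    proof -
      have "norm (r0 \<tau> $ k) \<le> norm (r0 \<tau>)" by (rule Finite_Cartesian_Product.norm_nth_le)
      also have "\<dots> \<le> Br" by (rule Br)
      also have "Br = K0 * a" using a by (simp add: K0_def)
      also have "\<dots> \<le> K0 * u k \<tau>" using K00 ua[of k \<tau>] by (rule mult_left_mono[rotated])
      finally show ?thesis .
    qed
    then show ?case using r0X by (simp add: hs_def)
  next
    case (Suc n)
    then have X: "hs n \<in> Xode T" and b: "\<And>k \<tau>. norm (hs n \<tau> $ k) \<le> K0 * q^n * u k \<tau>" by auto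
    have c: "continuous_on UNIV (hs n)" using X by (simp add: Xode_def)
    have "norm (Bop (hs n) \<tau> $ k) \<le> K0 * q^n * q * u k \<tau>" for k \<tau> by (rule wb[OF c b])
    moreover have "K0 * q^n * q * u k \<tau> = K0 * q ^ Suc n * u k \<tau>" for k \<tau> by (simp add: algebra_simps)
    ultimately show ?case using Bop_Xode[OF X] by (simp add: hs_Suc)
  qed
  have hsX: "hs n \<in> Xode T" for n using hsI by blast
  have hsb: "norm (hs n \<tau> $ k) \<le> K0 * q ^ n * u k \<tau>" for n k \<tau> using hsI by blast
  have hsc: "continuous_on UNIV (hs n)" for n using hsX[of n] by (simp add: Xode_def)
  have hsp: "hs n (t + T) = hs n t" for n t using hsX[of n] by (simp add: Xode_def)
  have q0: "q \<ge> 0" using q_bounds by simp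
  have hsn: "norm (hs n \<tau>) \<le> real CARD('a) * K0 * M * q ^ n" for n \<tau>
  proof -
    have "norm (hs n \<tau>) \<le> (\<Sum>i\<in>UNIV. norm (hs n \<tau> $ i))" by (rule norm_vec_le_sum)
    also have "\<dots> \<le> (\<Sum>i\<in>(UNIV::'a set). K0 * q ^ n * M)"
    proof (rule sum_mono)
      fix i
      have "norm (hs n \<tau> $ i) \<le> K0 * q ^ n * u i \<tau>" by (rule hsb)
      also have "\<dots> \<le> K0 * q ^ n * M" using K00 q0 uM[of i \<tau>] by (intro mult_left_mono) auto
      finally show "norm (hs n \<tau> $ i) \<le> K0 * q ^ n * M" .
    qed
    finally show ?thesis by (simp add: algebra_simps)
  qed
  have summ: "summable (\<lambda>n. real CARD('a) * K0 * M * q ^ n)"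
    by (intro summable_mult summable_geometric) (use q_bounds in auto)
  define \<phi> where "\<phi> = (\<lambda>\<tau>. \<Sum>n. hs n \<tau>)"
  have ul: "uniform_limit UNIV (\<lambda>N \<tau>. \<Sum>n<N. hs n \<tau>) \<phi> sequentially"
    unfolding \<phi>_def by (rule Weierstrass_m_test[OF _ summ]) (rule hsn)
  have \<phi>c: "continuous_on UNIV \<phi>"
    by (rule uniform_limit_theorem[OF _ ul]) (auto intro!: always_eventually continuous_on_sum hsc)
  have sumb: "summable (\<lambda>n. hs n \<tau>)" for \<tau>
    by (rule summable_comparison_test[OF _ summ]) (use hsn in auto)
  have \<phi>p: "\<phi> (t + T) = \<phi> t" for t by (simp add: \<phi>_def hsp)
  define SN where "SN N = (\<lambda>\<tau>. \<Sum>n<N. hs n \<tau>)" for N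
  have SNc: "continuous_on UNIV (SN N)" for N unfolding SN_def by (intro continuous_on_sum hsc)
  have fixpt: "Bop \<phi> t = \<phi> t - r0 t" for t
  proof -
    have e1: "Bop (SN N) t = SN (Suc N) t - r0 t" for N
    proof -
      have "Bop (SN N) t = (\<Sum>n<N. Bop (hs n) t)" unfolding SN_def by (rule Bop_sum[OF hsc])
      also have "\<dots> = (\<Sum>n<N. hs (Suc n) t)" by (simp add: hs_Suc)
      also have "\<dots> = SN (Suc N) t - r0 t"
        unfolding SN_def sum.lessThan_Suc_shift by (simp add: hs_def)
      finally show ?thesis .
    qed
    have l1: "(\<lambda>N. SN (Suc N) t) \<longlonglongrightarrow> \<phi> t"
      unfolding SN_def \<phi>_def by (rule LIMSEQ_Suc[OF summable_LIMSEQ[OF sumb]])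
    have l2: "(\<lambda>N. Bop (SN N) t) \<longlonglongrightarrow> Bop \<phi> t"
    proof (rule tendstoI)
      fix \<epsilon> :: real assume \<epsilon>: "\<epsilon> > 0"
      have CM: "real CARD('a) * M > 0" using M_pos by simp
      define \<delta> where "\<delta> = \<epsilon> * a / (2 * (real CARD('a) * M))"
      have \<delta>: "\<delta> > 0" using \<epsilon> a CM by (simp add: \<delta>_def)
      have "\<forall>\<^sub>F N in sequentially. \<forall>\<tau>\<in>UNIV. dist (SN N \<tau>) (\<phi> \<tau>) < \<delta>"
        using uniform_limitD[OF ul \<delta>] by (simp add: SN_def)
      then show "\<forall>\<^sub>F N in sequentially. dist (Bop (SN N) t) (Bop \<phi> t) < \<epsilon>"
      proof eventually_elim
        case (elim N)
        have d: "norm (\<phi> \<tau> - SN N \<tau>) \<le> \<delta>" for \<tau>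
          using elim by (auto simp: dist_norm norm_minus_commute intro: less_imp_le)
        have dc: "continuous_on UNIV (\<lambda>\<tau>. \<phi> \<tau> - SN N \<tau>)" by (intro continuous_intros \<phi>c SNc)
        have "dist (Bop (SN N) t) (Bop \<phi> t) = norm (Bop (\<lambda>\<tau>. \<phi> \<tau> - SN N \<tau>) t)"
          by (simp add: dist_norm Bop_diff[OF \<phi>c SNc] norm_minus_commute)
        also have "\<dots> \<le> (\<Sum>i\<in>UNIV. norm (Bop (\<lambda>\<tau>. \<phi> \<tau> - SN N \<tau>) t $ i))" by (rule norm_vec_le_sum)
        also have "\<dots> \<le> (\<Sum>i\<in>(UNIV::'a set). \<delta> * M / a)"
          by (intro sum_mono supb[OF dc d])
        also have "\<dots> = \<epsilon> / 2" using a CM M_pos by (simp add: \<delta>_def field_simps)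
        also have "\<dots> < \<epsilon>" using \<epsilon> by simp
        finally show ?case .
      qed
    qed
    have "(\<lambda>N. Bop (SN N) t) \<longlonglongrightarrow> \<phi> t - r0 t"
      unfolding e1 by (intro tendsto_diff l1 tendsto_const)
    then show ?thesis using l2 LIMSEQ_unique by blast
  qed
  define f where "f i \<tau> = \<psi> \<tau> $ i + (\<Sum>k\<in>UNIV. complex_of_real (Lc i k \<tau>) * \<phi> \<tau> $ k)" for i \<tau>
  have fc: "continuous_on UNIV (f i)" for i
    unfolding f_def by (intro continuous_intros continuous_on_component \<psi>c \<phi>c Lc_cont)
  have fp: "f i (\<tau> + T) = f i \<tau>" for i \<tau> by (simp add: f_def \<psi>p \<phi>p Lc_per)
  have \<phi>rep: "\<phi> t $ i = Rg T \<nu> (f i) t" for t i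
  proof -
    have "\<phi> t = r0 t + Bop \<phi> t" using fixpt[of t] by simp
    then have "\<phi> t $ i = Rg T \<nu> (\<lambda>\<tau>. \<psi> \<tau> $ i) t +
        Rg T \<nu> (\<lambda>\<tau>. \<Sum>k\<in>UNIV. complex_of_real (Lc i k \<tau>) * \<phi> \<tau> $ k) t"
      by (simp add: r0_def RV_def Bop_def)
    also have "\<dots> = Rg T \<nu> (f i) t"
      unfolding f_def by (rule Rg_add[symmetric, OF continuous_on_component[OF \<psi>c] H_cont[OF \<phi>c]])
    finally show ?thesis .
  qed
  have \<phi>eq: "\<phi> = (\<lambda>t. \<chi> i. Rg T \<nu> (f i) t)" by (rule ext) (simp add: vec_eq_iff \<phi>rep)
  define \<phi>' where "\<phi>' t = (\<chi> i. f i t - \<nu> * \<phi> t $ i)" for t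
  have \<phi>d: "(\<phi> has_vector_derivative \<phi>' t) (at t)" for t
  proof -
    have "((\<lambda>t. \<chi> i. Rg T \<nu> (f i) t) has_vector_derivative (\<chi> i. f i t - \<nu> * Rg T \<nu> (f i) t)) (at t)"
      by (rule has_vector_derivative_vec) (rule Rg_deriv[OF fc fp T ne_nu])
    then show ?thesis unfolding \<phi>eq[symmetric] \<phi>'_def by (simp add: \<phi>rep)
  qed
  have \<phi>'X: "\<phi>' \<in> Xode T"
    unfolding Xode_def \<phi>'_def
    by (auto intro!: continuous_on_vec_lambda continuous_intros fc continuous_on_component \<phi>c simp: fp \<phi>p)
  have \<phi>D: "\<phi> \<in> Dode T"
    unfolding Dode_def using \<phi>c \<phi>p \<phi>'X \<phi>d by (auto simp: Xode_def[of T] simp del: Xode_def intro!: bexI[of _ \<phi>'])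
  have "cscale \<mu> (\<phi> t) - PopL L \<phi> t = \<psi> t" for t
  proof -
    have "(cscale \<mu> (\<phi> t) - PopL L \<phi> t) $ i = \<psi> t $ i" for i
    proof -
      have "(cscale \<mu> (\<phi> t) - PopL L \<phi> t) $ i =
          \<mu> * \<phi> t $ i + \<phi>' t $ i - (\<Sum>k\<in>UNIV. complex_of_real (L i k t) * \<phi> t $ k)"
        by (rule PopL_comp[OF \<phi>d])
      also have "\<dots> = \<psi> t $ i"
        using Lc_sum[of i t "\<lambda>k. \<phi> t $ k"] by (simp add: \<phi>'_def f_def \<nu>_def algebra_simps)
      finally show ?thesis .
    qed
    then show ?thesis by (simp add: vec_eq_iff)
  qed
  then show ?thesis using \<phi>D by blast
qed

lemma resolvent: "in_resolvent UNIV (Xode T) (Dode T :: (real \<Rightarrow> complex^'a) set) (PopL L) \<mu>"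
  unfolding in_resolvent_def
proof (intro conjI ballI exI)
  show "\<exists>\<phi>\<in>Dode T. \<forall>p\<in>UNIV. cscale \<mu> (\<phi> p) - PopL L \<phi> p = \<psi> p" if "\<psi> \<in> Xode T" for \<psi> :: "real \<Rightarrow> complex^'a"
    using exist[OF that] by auto
  show "supn UNIV \<phi> \<le> (real CARD('a) * M / (r * a * (1 - q))) * supn UNIV (\<lambda>p. cscale \<mu> (\<phi> p) - PopL L \<phi> p)"
    if "\<phi> \<in> Dode T" for \<phi> :: "real \<Rightarrow> complex^'a"
    by (rule apriori[OF that])
qed

end

lemma finite_pos_choice:
  fixes P :: "'m::finite \<Rightarrow> real \<Rightarrow> bool"
  assumes ex: "\<And>i. \<exists>c>0. P i c" and mono: "\<And>i c c'. P i c \<Longrightarrow> 0 < c' \<Longrightarrow> c' \<le> c \<Longrightarrow> P i c'"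
  shows "\<exists>c>0. \<forall>i. P i c"
proof -
  obtain f where f: "\<And>i. f i > 0 \<and> P i (f i)" using ex by metis
  define c where "c = Min (range f)"
  have c0: "c > 0" unfolding c_def using f by (subst Min_gr_iff) auto
  have "c \<le> f i" for i unfolding c_def by (rule Min_le) auto
  then show ?thesis using c0 f mono by blast
qed

lemma measure_open_pos:
  fixes S :: "'a::euclidean_space set"
  assumes "open S" "bounded S" "w \<in> S"
  shows "measure lebesgue S > 0"
proof -
  obtain e where e: "e > 0" "ball w e \<subseteq> S" using assms open_contains_ball by blast
  have "measure lebesgue (ball w e) \<le> measure lebesgue S"
    by (rule measure_mono_fmeasurable[OF e(2)]) (auto intro: lmeasurable_open assms)
  moreover have "measure lebesgue (ball w e) = measure lborel (ball w e)" by simp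
  moreover have "measure lborel (ball w e) > 0" by (rule content_ball_pos[OF e(1)])
  ultimately show ?thesis by linarith
qed

lemma meas_lower:
  fixes \<Omega> :: "'a::euclidean_space set"
  assumes op: "open \<Omega>" and bd: "bounded \<Omega>" and \<rho>: "\<rho> > 0"
  shows "\<exists>m>0. \<forall>x\<in>closure \<Omega>. m \<le> measure lebesgue (\<Omega> \<inter> ball x \<rho>)"
proof -
  have K: "compact (closure \<Omega>)" using bd by (simp add: compact_closure)
  obtain C where C: "C \<subseteq> closure \<Omega>" "finite C" "closure \<Omega> \<subseteq> (\<Union>z\<in>C. ball z (\<rho>/2))"
    using compactE_image[OF K, of "closure \<Omega>" "\<lambda>z. ball z (\<rho>/2)"] \<rho> by force
  have pos: "measure lebesgue (\<Omega> \<inter> ball z (\<rho>/2)) > 0" if z: "z \<in> closure \<Omega>" for z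
  proof -
    have "\<exists>w\<in>\<Omega>. dist w z < \<rho>/2" using z \<rho> closure_approachable[of z \<Omega>] half_gt_zero by blast
    then obtain w where w: "w \<in> \<Omega>" "dist w z < \<rho>/2" by blast
    show ?thesis
      by (rule measure_open_pos[of _ w]) (use op bd w in \<open>auto simp: dist_commute\<close>)
  qed
  define m where "m = (if C = {} then 1 else Min ((\<lambda>z. measure lebesgue (\<Omega> \<inter> ball z (\<rho>/2))) ` C))"
  have m0: "m > 0" unfolding m_def using C pos by (auto simp: Min_gr_iff)
  have "m \<le> measure lebesgue (\<Omega> \<inter> ball x \<rho>)" if x: "x \<in> closure \<Omega>" for x
  proof -
    obtain z where z: "z \<in> C" "x \<in> ball z (\<rho>/2)" using C x by blast
    have "m \<le> measure lebesgue (\<Omega> \<inter> ball z (\<rho>/2))"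
      unfolding m_def using z C by (auto intro: Min_le)
    also have "\<dots> \<le> measure lebesgue (\<Omega> \<inter> ball x \<rho>)"
    proof (rule measure_mono_fmeasurable)
      show "\<Omega> \<inter> ball z (\<rho> / 2) \<subseteq> \<Omega> \<inter> ball x \<rho>"
      proof
        fix y assume y: "y \<in> \<Omega> \<inter> ball z (\<rho> / 2)"
        have "dist x y \<le> dist x z + dist z y" by (rule dist_triangle)
        then show "y \<in> \<Omega> \<inter> ball x \<rho>" using y z by (auto simp: dist_commute)
      qed
      show "\<Omega> \<inter> ball z (\<rho> / 2) \<in> sets lebesgue"
        using op by (intro fmeasurableD lmeasurable_open) auto
      show "\<Omega> \<inter> ball x \<rho> \<in> fmeasurable lebesgue"
        using op bd by (intro lmeasurable_open) auto
    qed
    finally show ?thesis .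
  qed
  then show ?thesis using m0 by blast
qed

lemma J_lower:
  fixes J :: "'a::euclidean_space \<Rightarrow> 'a \<Rightarrow> real"
  assumes Jc: "continuous_on UNIV (\<lambda>p. J (fst p) (snd p))" and Jd: "\<And>x. J x x > 0"
    and K: "compact K"
  shows "\<exists>\<rho>>0. \<exists>\<beta>>0. \<forall>x\<in>K. \<forall>y. dist x y < \<rho> \<longrightarrow> \<beta> \<le> J x y"
proof (cases "K = {}")
  case True then show ?thesis using zero_less_one by blast
next
  case False
  have "continuous_on K (\<lambda>x. (x, x))" by (intro continuous_intros)
  then have cd: "continuous_on K (\<lambda>x. J x x)"
    using continuous_on_compose2[OF Jc, of K "\<lambda>x. (x, x)"] by simp
  obtain x0 where x0: "x0 \<in> K" "\<And>y. y \<in> K \<Longrightarrow> J x0 x0 \<le> J y y"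
    using continuous_attains_inf[OF K False cd] by blast
  define j0 where "j0 = J x0 x0"
  have j0: "j0 > 0" using Jd by (simp add: j0_def)
  obtain R where R: "\<And>x. x \<in> K \<Longrightarrow> norm x \<le> R" using compact_imp_bounded[OF K] bounded_iff by blast
  define S where "S = K \<times> cball (0::'a) (R + 1)"
  have "compact S" unfolding S_def by (intro compact_Times K compact_cball)
  then have uc: "uniformly_continuous_on S (\<lambda>p. J (fst p) (snd p))"
    by (intro compact_uniformly_continuous continuous_on_subset[OF Jc]) auto
  obtain d where d: "d > 0" "\<And>p p'. p \<in> S \<Longrightarrow> p' \<in> S \<Longrightarrow> dist p' p < d \<Longrightarrow>
      dist (J (fst p') (snd p')) (J (fst p) (snd p)) < j0 / 2"
    using uc j0 unfolding uniformly_continuous_on_def by (metis half_gt_zero)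
  have main: "j0 / 2 \<le> J x y" if x: "x \<in> K" and xy: "dist x y < min d 1" for x y
  proof -
    have yS: "(x, y) \<in> S" unfolding S_def using x R[OF x] xy
      by (auto simp: dist_norm) (smt (verit) norm_triangle_ineq2 norm_minus_commute)
    have xS: "(x, x) \<in> S" unfolding S_def using x R[OF x] by auto
    have "dist (x, y) (x, x) < d" using xy by (simp add: dist_Pair_Pair dist_commute)
    then have "dist (J x y) (J x x) < j0 / 2" using d(2)[OF xS yS] by simp
    then have "\<bar>J x y - J x x\<bar> < j0 / 2" by (simp only: dist_real_def)
    moreover have "j0 \<le> J x x" using x0(2)[OF x] by (simp add: j0_def)
    ultimately show "j0 / 2 \<le> J x y" by linarith
  qed
  show ?thesis
    by (rule exI[of _ "min d 1"], rule conjI, simp add: d, rule exI[of _ "j0/2"]) (use j0 main in auto)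
qed

lemma integrable_open_subset:
  fixes f :: "'a::euclidean_space \<Rightarrow> real"
  assumes S: "open S" "bounded S" and SK: "S \<subseteq> K" and K: "compact K" and f: "continuous_on K f"
  shows "f integrable_on S"
proof -
  obtain B where B: "\<And>y. y \<in> f ` K \<Longrightarrow> norm y \<le> B"
    using compact_imp_bounded[OF compact_continuous_image[OF f K]] bounded_iff by metis
  have Sl: "S \<in> lmeasurable" using S by (rule lmeasurable_open[rotated])
  show ?thesis
  proof (rule measurable_bounded_by_integrable_imp_integrable)
    show "f \<in> borel_measurable (lebesgue_on S)"
      by (rule continuous_imp_measurable_on_sets_lebesgue[OF continuous_on_subset[OF f SK]])
         (use Sl in \<open>auto intro: fmeasurableD\<close>)
    show "(\<lambda>_. B) integrable_on S" by (rule integrable_on_const[OF Sl])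
    show "norm (f x) \<le> B" if "x \<in> S" for x using B SK that by auto
    show "S \<in> sets lebesgue" using Sl by (auto intro: fmeasurableD)
  qed
qed

theorem lemma2p7:
  fixes \<Omega> :: "(real^'n::finite) set"
    and T :: real
    and d :: "'m::finite \<Rightarrow> real"
    and J :: "'m \<Rightarrow> real^'n \<Rightarrow> real^'n \<Rightarrow> real"
    and l :: "'m \<Rightarrow> 'm \<Rightarrow> real^'n \<Rightarrow> real \<Rightarrow> real"
  assumes \<Omega>_open: "open \<Omega>" and \<Omega>_ne: "\<Omega> \<noteq> {}" and \<Omega>_bdd: "bounded \<Omega>"
    and \<Omega>_smooth: "smooth_boundary \<Omega>"
    and T_pos: "T > 0"
    and d_pos: "\<And>i. d i > 0"
    and J_cont: "\<And>i. continuous_on UNIV (\<lambda>p. J i (fst p) (snd p))"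
    and J_nonneg: "\<And>i x y. J i x y \<ge> 0"
    and J_diag: "\<And>i x. J i x x > 0"
    and J_int: "\<And>i x. (J i x has_integral 1) UNIV"
    and l_cont: "\<And>i k. continuous_on (closure \<Omega> \<times> UNIV) (\<lambda>p. l i k (fst p) (snd p))"
    and l_per: "\<And>i k x t. x \<in> closure \<Omega> \<Longrightarrow> l i k x (t + T) = l i k x t"
    and L1: "\<And>i k x t. i \<noteq> k \<Longrightarrow> x \<in> closure \<Omega> \<Longrightarrow> l i k x t \<ge> 0"
    and principal: "is_principal_eigenvalue (QS \<Omega>) (Xper \<Omega> T) (Dper \<Omega> T) (Lop \<Omega> d J l)"
  shows "spectral_bound (QS \<Omega>) (Xper \<Omega> T) (Dper \<Omega> T) (Lop \<Omega> d J l) > theta_M \<Omega> T l"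
proof -
  obtain s \<phi> where sb: "spectral_bound (QS \<Omega>) (Xper \<Omega> T) (Dper \<Omega> T) (Lop \<Omega> d J l) = ereal s"
    and \<phi>D: "\<phi> \<in> Dper \<Omega> T"
    and pos: "\<And>p i. p \<in> QS \<Omega> \<Longrightarrow> Im (\<phi> p $ i) = 0 \<and> Re (\<phi> p $ i) > 0"
    and eig: "\<And>p. p \<in> QS \<Omega> \<Longrightarrow> Lop \<Omega> d J l \<phi> p = cscale (complex_of_real s) (\<phi> p)"
    using principal unfolding is_principal_eigenvalue_def by blast
  define K where "K = closure \<Omega>"
  have Kc: "compact K" using \<Omega>_bdd by (simp add: K_def compact_closure)
  have Kne: "K \<noteq> {}" using \<Omega>_ne by (simp add: K_def)
  have \<Omega>K: "\<Omega> \<subseteq> K" by (simp add: K_def closure_subset)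
  have QS: "QS \<Omega> = K \<times> UNIV" by (simp add: QS_def K_def)
  obtain \<phi>' where \<phi>'X: "\<phi>' \<in> Xper \<Omega> T"
    and \<phi>d: "\<And>x t. x \<in> K \<Longrightarrow> ((\<lambda>s. \<phi> (x, s)) has_vector_derivative \<phi>' (x, t)) (at t)"
    using \<phi>D unfolding Dper_def K_def by blast
  have \<phi>c: "continuous_on (K \<times> UNIV) \<phi>" and \<phi>p: "\<And>x t. x \<in> K \<Longrightarrow> \<phi> (x, t + T) = \<phi> (x, t)"
    using \<phi>D unfolding Dper_def Xper_def QS_def K_def by auto
  have \<phi>'c: "continuous_on (K \<times> UNIV) \<phi>'" and \<phi>'p: "\<And>x t. x \<in> K \<Longrightarrow> \<phi>' (x, t + T) = \<phi>' (x, t)"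
    using \<phi>'X unfolding Xper_def QS_def K_def by auto
  define U where "U i x t = Re (\<phi> (x, t) $ i)" for i x t
  have Upos: "U i x t > 0" if "x \<in> K" for i x t using pos[of "(x, t)" i] that QS by (simp add: U_def)
  have \<phi>real: "\<phi> (x, t) $ i = complex_of_real (U i x t)" if "x \<in> K" for i x t
    using pos[of "(x, t)" i] that QS by (simp add: U_def complex_eq_iff)
  have Uc: "continuous_on (K \<times> UNIV) (\<lambda>p. Re (\<phi> p $ i))" for i
    by (intro continuous_intros continuous_on_component \<phi>c)
  have "\<exists>a>0. \<forall>i. \<forall>x\<in>K. \<forall>t. a \<le> U i x t"
  proof (rule finite_pos_choice)
    fix i :: 'm
    obtain q where q: "q \<in> K \<times> UNIV" "\<forall>x\<in>K. \<forall>t. Re (\<phi> q $ i) \<le> Re (\<phi> (x, t) $ i)"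
      using periodic2_min[OF T_pos Kc Kne Uc, of i] \<phi>p by auto
    have "Re (\<phi> q $ i) > 0" using pos[of q i] q(1) QS by simp
    then show "\<exists>c>0. \<forall>x\<in>K. \<forall>t. c \<le> U i x t" using q(2) by (auto simp: U_def)
  qed (use order_trans in blast)
  then obtain a where a: "a > 0" and ua: "\<And>i x t. x \<in> K \<Longrightarrow> a \<le> U i x t" by blast
  have nc: "continuous_on (K \<times> UNIV) (\<lambda>p. - norm (\<phi> p))" by (intro continuous_intros \<phi>c)
  obtain qM where qM: "qM \<in> K \<times> UNIV" "\<forall>x\<in>K. \<forall>t. - norm (\<phi> qM) \<le> - norm (\<phi> (x, t))"
    using periodic2_min[OF T_pos Kc Kne nc] \<phi>p by auto
  define M where "M = norm (\<phi> qM)"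
  have uM: "U i x t \<le> M" if x: "x \<in> K" for i x t
  proof -
    have "U i x t \<le> cmod (\<phi> (x, t) $ i)" unfolding U_def by (rule complex_Re_le_cmod)
    also have "\<dots> \<le> norm (\<phi> (x, t))" by (rule Finite_Cartesian_Product.norm_nth_le)
    also have "\<dots> \<le> M" using qM(2) x by (auto simp: M_def)
    finally show ?thesis .
  qed
  obtain x0 where x0: "x0 \<in> K" using Kne by blast
  have M_pos: "M > 0" using a ua[OF x0, of undefined 0] uM[OF x0, of undefined 0] by linarith
  have fc: "continuous_on K (\<lambda>y. J i x y * U i y t)" for i x t
  proof -
    have "continuous_on K (\<lambda>y. (x, y))" by (intro continuous_intros)
    then have c1: "continuous_on K (\<lambda>y. J i x y)"
      using continuous_on_compose2[OF J_cont[of i], of K "\<lambda>y. (x, y)"] by simp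
    have "continuous_on K (\<lambda>y. (y, t))" by (intro continuous_intros)
    then have c2: "continuous_on K (\<lambda>y. U i y t)"
      using continuous_on_compose2[OF Uc[of i], of K "\<lambda>y. (y, t)"] by (auto simp: U_def)
    show ?thesis by (intro continuous_intros c1 c2)
  qed
  have fint: "(\<lambda>y. J i x y * U i y t) integrable_on S" if "open S" "bounded S" "S \<subseteq> K" for S i x t
    by (rule integrable_open_subset[OF that Kc fc])
  have "\<exists>\<gamma>>0. \<forall>i. \<forall>x\<in>K. \<forall>t. \<gamma> * U i x t \<le> d i * integral \<Omega> (\<lambda>y. J i x y * U i y t)"
  proof (rule finite_pos_choice)
    fix i :: 'm
    obtain \<rho> \<beta> where \<rho>: "\<rho> > 0" "\<beta> > 0" "\<And>x y. x \<in> K \<Longrightarrow> dist x y < \<rho> \<Longrightarrow> \<beta> \<le> J i x y"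
      using J_lower[OF J_cont[of i] J_diag Kc] by blast
    obtain m where m: "m > 0" "\<And>x. x \<in> K \<Longrightarrow> m \<le> measure lebesgue (\<Omega> \<inter> ball x \<rho>)"
      using meas_lower[OF \<Omega>_open \<Omega>_bdd \<rho>(1)] unfolding K_def by blast
    define \<gamma>i where "\<gamma>i = d i * \<beta> * a * m / M"
    have \<gamma>i: "\<gamma>i > 0" using d_pos[of i] \<rho> a m M_pos by (simp add: \<gamma>i_def)
    have "\<gamma>i * U i x t \<le> d i * integral \<Omega> (\<lambda>y. J i x y * U i y t)" if x: "x \<in> K" for x t
    proof -
      let ?f = "\<lambda>y. J i x y * U i y t"
      let ?B = "\<Omega> \<inter> ball x \<rho>"
      have Bl: "?B \<in> lmeasurable" using \<Omega>_open \<Omega>_bdd by (intro lmeasurable_open) auto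
      have nn: "\<forall>y\<in>\<Omega>. 0 \<le> ?f y" using \<Omega>K Upos J_nonneg by (meson less_imp_le mult_nonneg_nonneg subsetD)
      have "integral ?B ?f \<le> integral \<Omega> ?f"
        by (rule integral_subset_le[OF _ _ _ nn]) (use \<Omega>K \<Omega>_open \<Omega>_bdd
            in \<open>auto intro!: fint bounded_Int\<close>)
      moreover have "integral ?B (\<lambda>y. (\<beta> * a) *\<^sub>R 1) \<le> integral ?B ?f"
      proof (rule integral_le)
        show "(\<lambda>y. (\<beta> * a) *\<^sub>R 1) integrable_on ?B" by (rule integrable_on_const[OF Bl])
        show "?f integrable_on ?B" using \<Omega>K \<Omega>_open \<Omega>_bdd by (intro fint) auto
        show "(\<beta> * a) *\<^sub>R 1 \<le> ?f y" if y: "y \<in> ?B" for y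
        proof -
          have "\<beta> \<le> J i x y" using \<rho>(3)[OF x] y by auto
          moreover have "a \<le> U i y t" using ua y \<Omega>K by auto
          ultimately show ?thesis using \<rho>(2) a by (simp add: mult_mono)
        qed
      qed
      moreover have "integral ?B (\<lambda>y. (\<beta> * a) *\<^sub>R 1) = \<beta> * a * measure lebesgue ?B"
      proof -
        have "integral ?B (\<lambda>y. (\<beta> * a) *\<^sub>R 1) = (\<beta> * a) *\<^sub>R integral ?B (\<lambda>y. 1::real)"
          by (rule integral_cmul)
        then show ?thesis using lmeasure_integral[OF Bl] by (simp only: real_scaleR_def)
      qed
      moreover have "\<beta> * a * m \<le> \<beta> * a * measure lebesgue ?B"
        using m(2)[OF x] \<rho>(2) a by simp
      ultimately have "\<beta> * a * m \<le> integral \<Omega> ?f" by linarith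
      then have "d i * (\<beta> * a * m) \<le> d i * integral \<Omega> ?f"
        using d_pos[of i] by (intro mult_left_mono) auto
      moreover have "\<gamma>i * U i x t \<le> \<gamma>i * M" using \<gamma>i uM[OF x] by simp
      moreover have "\<gamma>i * M = d i * (\<beta> * a * m)" using M_pos by (simp add: \<gamma>i_def)
      ultimately show ?thesis by linarith
    qed
    then show "\<exists>c>0. \<forall>x\<in>K. \<forall>t. c * U i x t \<le> d i * integral \<Omega> (\<lambda>y. J i x y * U i y t)"
      using \<gamma>i by blast
  next
    fix i c c'
    assume "\<forall>x\<in>K. \<forall>t. c * U i x t \<le> d i * integral \<Omega> (\<lambda>y. J i x y * U i y t)" "0 < c'" "c' \<le> c"
    then show "\<forall>x\<in>K. \<forall>t. c' * U i x t \<le> d i * integral \<Omega> (\<lambda>y. J i x y * U i y t)"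
      using Upos by (meson less_imp_le mult_right_mono order_trans)
  qed
  then obtain \<gamma> where \<gamma>: "\<gamma> > 0"
    and gu: "\<And>i x t. x \<in> K \<Longrightarrow> \<gamma> * U i x t \<le> d i * integral \<Omega> (\<lambda>y. J i x y * U i y t)" by blast
  have ode: "Re (\<phi>' (x, t) $ i) = (\<Sum>k\<in>UNIV. l i k x t * U k x t) - s * U i x t
        + d i * integral \<Omega> (\<lambda>y. J i x y * U i y t)" if x: "x \<in> K" for x t i
  proof -
    have vd: "vector_derivative (\<lambda>s. \<phi> (x, s)) (at t) = \<phi>' (x, t)"
      by (rule vector_derivative_at[OF \<phi>d[OF x]])
    have I: "integral \<Omega> (\<lambda>y. complex_of_real (J i x y) * \<phi> (y, t) $ i) =
        complex_of_real (integral \<Omega> (\<lambda>y. J i x y * U i y t))"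
    proof -
      have "integral \<Omega> (\<lambda>y. complex_of_real (J i x y) * \<phi> (y, t) $ i) =
          integral \<Omega> (\<lambda>y. complex_of_real (J i x y * U i y t))"
        by (rule integral_cong) (use \<Omega>K \<phi>real in auto)
      also have "\<dots> = complex_of_real (integral \<Omega> (\<lambda>y. J i x y * U i y t))"
        using integral_linear[OF fint[OF \<Omega>_open \<Omega>_bdd \<Omega>K] bounded_linear_of_real] by (simp add: o_def)
      finally show ?thesis .
    qed
    have "Lop \<Omega> d J l \<phi> (x, t) $ i = cscale (complex_of_real s) (\<phi> (x, t)) $ i"
      using eig[of "(x, t)"] x QS by simp
    then have "complex_of_real (d i) * complex_of_real (integral \<Omega> (\<lambda>y. J i x y * U i y t))
        + (\<Sum>k\<in>UNIV. complex_of_real (l i k x t) * complex_of_real (U k x t)) - \<phi>' (x, t) $ i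
        = complex_of_real s * complex_of_real (U i x t)"
      by (simp add: Lop_def cscale_def vd I \<phi>real[OF x])
    then have "Re (complex_of_real (d i) * complex_of_real (integral \<Omega> (\<lambda>y. J i x y * U i y t))
        + (\<Sum>k\<in>UNIV. complex_of_real (l i k x t) * complex_of_real (U k x t)) - \<phi>' (x, t) $ i)
        = Re (complex_of_real s * complex_of_real (U i x t))" by simp
    then show ?thesis by (simp add: Re_sum)
  qed
  have th: "theta T l x \<le> ereal (s - \<gamma>)" if x: "x \<in> K" for x
  proof -
    define Lx where "Lx i k t = l i k x t" for i k t
    define u where "u i t = U i x t" for i t
    define u' where "u' i t = Re (\<phi>' (x, t) $ i)" for i t
    define g where "g i t = d i * integral \<Omega> (\<lambda>y. J i x y * U i y t)" for i t
    have xK: "x \<in> closure \<Omega>" using x by (simp add: K_def)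
    have odeR: "odeR T Lx u u' g s \<gamma> a M"
    proof
      show "T > 0" by (rule T_pos)
      show "continuous_on UNIV (Lx i k)" for i k
      proof -
        have "continuous_on UNIV (\<lambda>t. (x, t))" by (intro continuous_intros)
        then show ?thesis
          using continuous_on_compose2[OF l_cont[of i k], of UNIV "\<lambda>t. (x, t)"] xK
          by (auto simp: Lx_def[abs_def])
      qed
      show "Lx i k (t + T) = Lx i k t" for i k t using l_per[OF xK] by (simp add: Lx_def)
      show "i \<noteq> k \<Longrightarrow> Lx i k t \<ge> 0" for i k t using L1 xK by (simp add: Lx_def)
      show "(u i has_real_derivative u' i t) (at t)" for i t
      proof -
        have "((\<lambda>s. \<phi> (x, s) $ i) has_vector_derivative \<phi>' (x, t) $ i) (at t)"
          using bounded_linear.has_vector_derivative[OF bounded_linear_vec_nth \<phi>d[OF x], of i] by simp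
        then show ?thesis unfolding has_vector_derivative_complex_iff
          by (simp add: u_def[abs_def] u'_def U_def)
      qed
      show "continuous_on UNIV (u' i)" for i
      proof -
        have "continuous_on UNIV (\<lambda>t. (x, t))" by (intro continuous_intros)
        moreover have "continuous_on (K \<times> UNIV) (\<lambda>p. Re (\<phi>' p $ i))"
          by (intro continuous_intros continuous_on_component \<phi>'c)
        ultimately show ?thesis
          using continuous_on_compose2[of "K \<times> UNIV" "\<lambda>p. Re (\<phi>' p $ i)" UNIV "\<lambda>t. (x, t)"] x
          by (auto simp: u'_def[abs_def])
      qed
      show "u i (t + T) = u i t" for i t using \<phi>p[OF x] by (simp add: u_def U_def)
      show "u' i t = (\<Sum>k\<in>UNIV. Lx i k t * u k t) - s * u i t + g i t" for i t
        using ode[OF x] by (simp add: u'_def Lx_def u_def g_def)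
      show "a > 0" by (rule a)
      show "a \<le> u i t" for i t using ua[OF x] by (simp add: u_def)
      show "u i t \<le> M" for i t using uM[OF x] by (simp add: u_def)
      show "\<gamma> > 0" by (rule \<gamma>)
      show "\<gamma> * u i t \<le> g i t" for i t using gu[OF x] by (simp add: u_def g_def)
    qed
    obtain LB where LB: "\<And>i t. \<bar>Lx i i t\<bar> \<le> LB"
    proof -
      have "\<exists>B. \<forall>t. norm ((\<chi> i. Lx i i t) :: real^'m) \<le> B"
      proof (rule periodic_bounded[OF T_pos])
        show "(\<chi> i. Lx i i (t + T)) = (\<chi> i. Lx i i t)" for t using odeR.Lp[OF odeR] by simp
        show "continuous_on UNIV (\<lambda>t. \<chi> i. Lx i i t)"
          by (intro continuous_on_vec_lambda odeR.Lc[OF odeR])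
      qed
      then obtain B where B: "\<And>t. norm ((\<chi> i. Lx i i t) :: real^'m) \<le> B" by blast
      have "\<bar>Lx i i t\<bar> \<le> B" for i t
        using component_le_norm_cart[of "(\<chi> i. Lx i i t) :: real^'m" i] B[of t] by simp
      then show ?thesis using that by blast
    qed
    have res: "in_resolvent UNIV (Xode T) (Dode T :: (real \<Rightarrow> complex^'m) set) (PopL Lx) \<mu>"
      if mu: "Re \<mu> > s - \<gamma>" for \<mu>
    proof -
      define c where "c = LB + \<bar>Re \<mu>\<bar> + 1"
      interpret odeRmu T Lx u u' g s \<gamma> a M \<mu> c
      proof (rule odeRmu.intro[OF odeR], unfold_locales)
        show "s - \<gamma> < Re \<mu>" by (rule mu)
        show "0 \<le> Lx i i t + c" for i t using LB[of i t] by (simp add: c_def)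
        show "0 < Re \<mu> + c" using LB[of undefined 0] by (simp add: c_def)
      qed
      show ?thesis by (rule resolvent)
    qed
    have PopEq: "Pop l x = PopL Lx" by (simp add: Pop_def PopL_def Lx_def fun_eq_iff)
    show ?thesis
      unfolding theta_def spectral_bound_def spectrum_op_def PopEq
    proof (rule SUP_least)
      fix \<mu> assume "\<mu> \<in> {\<mu>. \<not> in_resolvent UNIV (Xode T) (Dode T :: (real \<Rightarrow> complex^'m) set) (PopL Lx) \<mu>}"
      then have "\<not> Re \<mu> > s - \<gamma>" using res by blast
      then show "ereal (Re \<mu>) \<le> ereal (s - \<gamma>)" by simp
    qed
  qed
  have "theta_M \<Omega> T l \<le> ereal (s - \<gamma>)" unfolding theta_M_def by (rule SUP_least) (use th K_def in auto)
  also have "\<dots> < ereal s" using \<gamma> by simp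
  finally show ?thesis using sb by simp
qed

end
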